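(* Let $1\le p<\infty$, $\theta,\rho\in(0,1)$, $\Omega\in\mathbb{IR}^{d_0}$ a box with nonempty interior, and $\Phi:\mathbb R^{d_0}\to\mathbb R^{d_{L+1}}$ a feedforward neural network with differentiable activation $\sigma$ such that $\sigma,\sigma'$ admit interval enclosures $\Sigma,\Sigma'$ that are Hölder continuous on $\mathbb{IR}$. Define $f_{\Phi,1,p}(x)=\sum_{i=1}^{d_{L+1}}\big(|\Phi_i(x)|^p+\sum_{j=1}^{d_0}|\partial_{x_j}\Phi_i(x)|^p\big)$ and $$F_{\Phi,1,p}(K)=\sum_{i=1}^{d_{L+1}}\Big(|\mathrm{Fval}_{\Phi,L+1,\Sigma}(K)_i|^p+\sum_{j=1}^{d_0}|\mathrm{Jac}_{\Phi,0,\Sigma,\Sigma'}(K)_{ij}|^p\Big).$$ Then $f_{\Phi,1,p}$ is continuous, $F_{\Phi,1,p}$ is a Hölder continuous interval enclosure of $f_{\Phi,1,p}$ on $\Omega$, and AdaQuad with integrand $f_{\Phi,1,p}$, enclosure $F_{\Phi,1,p}$, a positive-weight quadrature rule exact for constants, marking $\mathrm{D\ddot orfler}_\theta$ and refinement $\mathrm{H\ddot older}_\rho$ yields for all $n$ $$\big|\,\|\Phi\|_{W^{1,p}(\Omega;\mathbb R^{d_{L+1}})}-\mathrm Q_n^{1/p}\big|\le\eta_n^{1/p},\qquad\eta_{n+1}\le(1-\theta(1-\rho))\eta_n.$$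
   Context: $\|\Phi\|_{W^{k,p}(\Omega;\mathbb R^m)}=(\sum_{i=1}^m\sum_{|\alpha|\le k}\int_\Omega|D^\alpha\Phi_i|^pdx)^{1/p}$, sum over multi-indices each once. Intervals, boxes, interval arithmetic $X\circ Y=\{x\circ y\}$, interval matrix products via usual formula (left to right), width $w$ (max entry width), $|X|=\{|x|:x\in X\}$, $X^\gamma=[\underline X^\gamma,\overline X^\gamma]$ for $\underline X\ge0$. Interval enclosure of $\phi$ on $\Omega$: inclusion isotonic $F$ with $\phi(K)\subset F(K)$ for boxes $K\subset\Omega$; Hölder continuous: $w(F(K))\le Cw(K)^\gamma$, $C>0$, $\gamma\in(0,1]$. Network: weights $W^{(\ell)}$, biases $b^{(\ell)}$, $z^{(\ell)}=W^{(\ell-1)}x^{(\ell-1)}+b^{(\ell-1)}$, $x^{(\ell)}=\sigma(z^{(\ell)})$, $x^{(0)}=u$, $\Phi=z^{(L+1)}$. $\mathrm{Fval}_{\Phi,\ell,\Sigma}(K)$: $X^{(0)}=K$; for $k=0,\dots,\ell-1$: $Z^{(k+1)}=W^{(k)}X^{(k)}+b^{(k)}$, $X^{(k+1)}=\Sigma(Z^{(k+1)})$; return $Z^{(\ell)}$. $\mathrm{Jac}_{\Phi,\ell,\Sigma,\Sigma'}(K)$: $J^{(L)}=W^{(L)}$; for $k=L-1,\dots,\ell$: $J^{(k)}=(J^{(k+1)}\mathrm{diag}(\Sigma'(\mathrm{Fval}_{\Phi,k+1,\Sigma}(K))))W^{(k)}$; return $J^{(\ell)}$. AdaQuad: $\mathcal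 P_0=\{\Omega\}$; with $\eta_K=w(F(K))\mathrm{vol}(K)$, $\mathcal P_{n+1}=(\mathcal P_n\setminus\widetilde{\mathcal P}_n)\cup\bigcup_{K\in\widetilde{\mathcal P}_n}\mathcal R(K)$ with $\widetilde{\mathcal P}_n$ the marked set; $\mathrm Q_n=\sum_{K\in\mathcal P_n}\mathcal I(f,K)$, $\eta_n=\sum_{K\in\mathcal P_n}\eta_K$. Quadrature $\mathcal I(f,K)=\sum_iw_if(x_i)$, $x_i\in K$, $w_i>0$, $\sum w_i=\mathrm{vol}(K)$. $\mathrm{D\ddot orfler}_\theta$: repeatedly mark all unmarked elements of maximal indicator until the marked sum is $\ge\theta$ times the total. $\mathrm{H\ddot older}_\rho(K)$ with a Hölder constant $C$ and exponent $\gamma$ of $F$: if $\eta_K=0$ return $\{K\}$; else split each side $K_i$ (length $l_i$) uniformly into $m_i=\lceil l_i(C\mathrm{vol}(K)/(\rho\eta_K))^{1/\gamma}\rceil$ pieces and return all product boxes. *)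

theory Defs
  imports "HOL-Analysis.Analysis" "HOL-Probability.Probability" "HOL-Library.Interval"
begin

type_synonym ivl = "real interval"
type_synonym box = "real interval list"
type_synonym ivec = "nat \<Rightarrow> real interval"
type_synonym imat = "nat \<Rightarrow> nat \<Rightarrow> real interval"

text \<open>X^gamma for nonnegative intervals\<close>
definition ipowr :: "ivl \<Rightarrow> real \<Rightarrow> ivl" where
  "ipowr X g = Ivl (lower X powr g) (upper X powr g)"

definition imatmul :: "nat \<Rightarrow> imat \<Rightarrow> imat \<Rightarrow> imat" where
  "imatmul n A B = (\<lambda>i j. \<Sum>l<n. A i l * B l j)"

definition idiag :: "ivec \<Rightarrow> imat" where
  "idiag D = (\<lambda>i j. if i = j then D i else 0)"

definition ipoint_mat :: "(nat \<Rightarrow> nat \<Rightarrow> real) \<Rightarrow> imat" where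
  "ipoint_mat M = (\<lambda>i j. interval_of (M i j))"

definition in_box :: "(nat \<Rightarrow> real) \<Rightarrow> box \<Rightarrow> bool" where
  "in_box x K \<longleftrightarrow> (\<forall>j<length K. x j \<in> set_of (K ! j))"

definition box_width :: "box \<Rightarrow> real" where
  "box_width K = Max (width ` set K)"

definition box_vol :: "box \<Rightarrow> real" where
  "box_vol K = prod_list (map width K)"

definition subbox :: "box \<Rightarrow> box \<Rightarrow> bool" where
  "subbox K K' \<longleftrightarrow> length K = length K' \<and> (\<forall>j<length K. set_of (K ! j) \<subseteq> set_of (K' ! j))"

definition ivl_enclosure :: "(real \<Rightarrow> real) \<Rightarrow> (ivl \<Rightarrow> ivl) \<Rightarrow> bool" where
  "ivl_enclosure s S \<longleftrightarrow>
     (\<forall>X Y. set_of X \<subseteq> set_of Y \<longrightarrow> set_of (S X) \<subseteq> set_of (S Y)) \<and>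
     (\<forall>X. s ` set_of X \<subseteq> set_of (S X))"

definition ivl_hoelder :: "(ivl \<Rightarrow> ivl) \<Rightarrow> bool" where
  "ivl_hoelder S \<longleftrightarrow> (\<exists>C g. C > 0 \<and> 0 < g \<and> g \<le> 1 \<and> (\<forall>X. width (S X) \<le> C * width X powr g))"

definition box_enclosure :: "box \<Rightarrow> ((nat \<Rightarrow> real) \<Rightarrow> real) \<Rightarrow> (box \<Rightarrow> ivl) \<Rightarrow> bool" where
  "box_enclosure \<Omega> phi F \<longleftrightarrow>
     (\<forall>K K'. subbox K K' \<and> subbox K' \<Omega> \<longrightarrow> set_of (F K) \<subseteq> set_of (F K')) \<and>
     (\<forall>K x. subbox K \<Omega> \<and> in_box x K \<longrightarrow> phi x \<in> set_of (F K))"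

definition box_hoelder :: "box \<Rightarrow> (box \<Rightarrow> ivl) \<Rightarrow> real \<Rightarrow> real \<Rightarrow> bool" where
  "box_hoelder \<Omega> F C g \<longleftrightarrow> C > 0 \<and> 0 < g \<and> g \<le> 1 \<and>
     (\<forall>K. subbox K \<Omega> \<longrightarrow> width (F K) \<le> C * box_width K powr g)"

text \<open>Network with L hidden layers, widths d 0, ..., d (L+1), weights W l (a d(l+1) x d(l) matrix),
  biases b l, activation s. Vectors are nat-indexed.\<close>

fun nn_x :: "nat \<Rightarrow> (nat \<Rightarrow> nat) \<Rightarrow> (nat \<Rightarrow> nat \<Rightarrow> nat \<Rightarrow> real) \<Rightarrow> (nat \<Rightarrow> nat \<Rightarrow> real)
    \<Rightarrow> (real \<Rightarrow> real) \<Rightarrow> (nat \<Rightarrow> real) \<Rightarrow> (nat \<Rightarrow> real)" where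
  "nn_x 0 d W b s u = u"
| "nn_x (Suc k) d W b s u = (\<lambda>i. s ((\<Sum>j<d k. W k i j * nn_x k d W b s u j) + b k i))"

definition nn_eval :: "nat \<Rightarrow> (nat \<Rightarrow> nat) \<Rightarrow> (nat \<Rightarrow> nat \<Rightarrow> nat \<Rightarrow> real) \<Rightarrow> (nat \<Rightarrow> nat \<Rightarrow> real)
    \<Rightarrow> (real \<Rightarrow> real) \<Rightarrow> (nat \<Rightarrow> real) \<Rightarrow> (nat \<Rightarrow> real)" where
  "nn_eval L d W b s u = (\<lambda>i. (\<Sum>j<d L. W L i j * nn_x L d W b s u j) + b L i)"

fun ival_x :: "nat \<Rightarrow> (nat \<Rightarrow> nat) \<Rightarrow> (nat \<Rightarrow> nat \<Rightarrow> nat \<Rightarrow> real) \<Rightarrow> (nat \<Rightarrow> nat \<Rightarrow> real)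
    \<Rightarrow> (ivl \<Rightarrow> ivl) \<Rightarrow> box \<Rightarrow> ivec" where
  "ival_x 0 d W b S K = (\<lambda>j. K ! j)"
| "ival_x (Suc k) d W b S K =
     (\<lambda>i. S ((\<Sum>j<d k. interval_of (W k i j) * ival_x k d W b S K j) + interval_of (b k i)))"

fun Fval :: "nat \<Rightarrow> (nat \<Rightarrow> nat) \<Rightarrow> (nat \<Rightarrow> nat \<Rightarrow> nat \<Rightarrow> real) \<Rightarrow> (nat \<Rightarrow> nat \<Rightarrow> real)
    \<Rightarrow> (ivl \<Rightarrow> ivl) \<Rightarrow> box \<Rightarrow> ivec" where
  "Fval 0 d W b S K = (\<lambda>j. K ! j)"  \<comment> \<open>not used\<close>
| "Fval (Suc k) d W b S K =
     (\<lambda>i. (\<Sum>j<d k. interval_of (W k i j) * ival_x k d W b S K j) + interval_of (b k i))"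

text \<open>Jac: jac_rec n computes J^(L-n)\<close>
fun jac_rec :: "nat \<Rightarrow> nat \<Rightarrow> (nat \<Rightarrow> nat) \<Rightarrow> (nat \<Rightarrow> nat \<Rightarrow> nat \<Rightarrow> real) \<Rightarrow> (nat \<Rightarrow> nat \<Rightarrow> real)
    \<Rightarrow> (ivl \<Rightarrow> ivl) \<Rightarrow> (ivl \<Rightarrow> ivl) \<Rightarrow> box \<Rightarrow> imat" where
  "jac_rec 0 L d W b S S' K = ipoint_mat (W L)"
| "jac_rec (Suc n) L d W b S S' K =
     (let k = L - Suc n in
      imatmul (d (Suc k))
        (imatmul (d (Suc k)) (jac_rec n L d W b S S' K)
           (idiag (\<lambda>i. S' (Fval (Suc k) d W b S K i))))
        (ipoint_mat (W k)))"

definition Jac :: "nat \<Rightarrow> nat \<Rightarrow> (nat \<Rightarrow> nat) \<Rightarrow> (nat \<Rightarrow> nat \<Rightarrow> nat \<Rightarrow> real) \<Rightarrow> (nat \<Rightarrow> nat \<Rightarrow> real)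
    \<Rightarrow> (ivl \<Rightarrow> ivl) \<Rightarrow> (ivl \<Rightarrow> ivl) \<Rightarrow> box \<Rightarrow> imat" where
  "Jac l L d W b S S' K = jac_rec (L - l) L d W b S S' K"

definition partial :: "((nat \<Rightarrow> real) \<Rightarrow> real) \<Rightarrow> nat \<Rightarrow> (nat \<Rightarrow> real) \<Rightarrow> real" where
  "partial g j x = deriv (\<lambda>t. g (x(j := t))) (x j)"

definition f_W1p :: "nat \<Rightarrow> (nat \<Rightarrow> nat) \<Rightarrow> (nat \<Rightarrow> nat \<Rightarrow> nat \<Rightarrow> real) \<Rightarrow> (nat \<Rightarrow> nat \<Rightarrow> real)
    \<Rightarrow> (real \<Rightarrow> real) \<Rightarrow> real \<Rightarrow> (nat \<Rightarrow> real) \<Rightarrow> real" where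
  "f_W1p L d W b s p x =
     (\<Sum>i<d (Suc L). \<bar>nn_eval L d W b s x i\<bar> powr p
        + (\<Sum>j<d 0. \<bar>partial (\<lambda>y. nn_eval L d W b s y i) j x\<bar> powr p))"

definition F_W1p :: "nat \<Rightarrow> (nat \<Rightarrow> nat) \<Rightarrow> (nat \<Rightarrow> nat \<Rightarrow> nat \<Rightarrow> real) \<Rightarrow> (nat \<Rightarrow> nat \<Rightarrow> real)
    \<Rightarrow> (ivl \<Rightarrow> ivl) \<Rightarrow> (ivl \<Rightarrow> ivl) \<Rightarrow> real \<Rightarrow> box \<Rightarrow> ivl" where
  "F_W1p L d W b S S' p K =
     (\<Sum>i<d (Suc L). ipowr (abs_interval (Fval (Suc L) d W b S K i)) p
        + (\<Sum>j<d 0. ipowr (abs_interval (Jac 0 L d W b S S' K i j)) p))"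

text \<open>Lebesgue measure on R^n (as extensional functions on {..<n})\<close>
abbreviation lebesgue_n :: "nat \<Rightarrow> (nat \<Rightarrow> real) measure" where
  "lebesgue_n n \<equiv> PiM {..<n} (\<lambda>_. lborel)"

definition box_set :: "box \<Rightarrow> (nat \<Rightarrow> real) set" where
  "box_set K = PiE {..<length K} (\<lambda>j. set_of (K ! j))"

definition sobolev_W1p_norm :: "nat \<Rightarrow> box \<Rightarrow> nat \<Rightarrow> ((nat \<Rightarrow> real) \<Rightarrow> nat \<Rightarrow> real) \<Rightarrow> real \<Rightarrow> real" where
  "sobolev_W1p_norm d0 \<Omega> m Phi p =
     (\<Sum>i<m. (LINT x:box_set \<Omega>|lebesgue_n d0. \<bar>Phi x i\<bar> powr p)
        + (\<Sum>j<d0. (LINT x:box_set \<Omega>|lebesgue_n d0. \<bar>partial (\<lambda>y. Phi y i) j x\<bar> powr p))) powr (1 / p)"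

type_synonym qrule = "box \<Rightarrow> (real \<times> (nat \<Rightarrow> real)) list"

definition valid_qrule :: "box \<Rightarrow> qrule \<Rightarrow> bool" where
  "valid_qrule \<Omega> R \<longleftrightarrow> (\<forall>K. subbox K \<Omega> \<longrightarrow>
      (\<forall>(w, x) \<in> set (R K). w > 0 \<and> in_box x K) \<and> sum_list (map fst (R K)) = box_vol K)"

definition quad :: "qrule \<Rightarrow> ((nat \<Rightarrow> real) \<Rightarrow> real) \<Rightarrow> box \<Rightarrow> real" where
  "quad R f K = sum_list (map (\<lambda>(w, x). w * f x) (R K))"

definition indicator_eta :: "(box \<Rightarrow> ivl) \<Rightarrow> box \<Rightarrow> real" where
  "indicator_eta F K = width (F K) * box_vol K"

text \<open>Each non-terminal
  step marks at least one element, so card P iterations suffice; once the stopping criterion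
  holds the step is the identity.\<close>
definition doerfler_step :: "real \<Rightarrow> (box \<Rightarrow> real) \<Rightarrow> box set \<Rightarrow> box set \<Rightarrow> box set" where
  "doerfler_step th eta P M =
     (if th * sum eta P \<le> sum eta M then M
      else M \<union> {K \<in> P - M. eta K = Max (eta ` (P - M))})"

definition doerfler :: "real \<Rightarrow> (box \<Rightarrow> real) \<Rightarrow> box set \<Rightarrow> box set" where
  "doerfler th eta P = (doerfler_step th eta P ^^ card P) {}"

definition split_uniform :: "ivl \<Rightarrow> nat \<Rightarrow> ivl list" where
  "split_uniform X m = map (\<lambda>k. Ivl (lower X + real k * width X / real m)
                                     (lower X + real (Suc k) * width X / real m)) [0..<m]"

definition hoelder_refine :: "real \<Rightarrow> real \<Rightarrow> real \<Rightarrow> (box \<Rightarrow> ivl) \<Rightarrow> box \<Rightarrow> box set" where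
  "hoelder_refine C g rho F K =
     (let eta = indicator_eta F K in
      if eta = 0 then {K}
      else set (product_lists
        (map (\<lambda>X. split_uniform X (nat \<lceil>width X * (C * box_vol K / (rho * eta)) powr (1 / g)\<rceil>)) K)))"

fun adaquad_P :: "real \<Rightarrow> real \<Rightarrow> real \<Rightarrow> real \<Rightarrow> (box \<Rightarrow> ivl) \<Rightarrow> box \<Rightarrow> nat \<Rightarrow> box set" where
  "adaquad_P th C g rho F \<Omega> 0 = {\<Omega>}"
| "adaquad_P th C g rho F \<Omega> (Suc n) =
     (let P = adaquad_P th C g rho F \<Omega> n; M = doerfler th (indicator_eta F) P in
      (P - M) \<union> \<Union> (hoelder_refine C g rho F ` M))"

definition adaquad_Q :: "real \<Rightarrow> real \<Rightarrow> real \<Rightarrow> real \<Rightarrow> (box \<Rightarrow> ivl) \<Rightarrow> box \<Rightarrow> qrule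
    \<Rightarrow> ((nat \<Rightarrow> real) \<Rightarrow> real) \<Rightarrow> nat \<Rightarrow> real" where
  "adaquad_Q th C g rho F \<Omega> R f n = (\<Sum>K\<in>adaquad_P th C g rho F \<Omega> n. quad R f K)"

definition adaquad_eta :: "real \<Rightarrow> real \<Rightarrow> real \<Rightarrow> real \<Rightarrow> (box \<Rightarrow> ivl) \<Rightarrow> box \<Rightarrow> nat \<Rightarrow> real" where
  "adaquad_eta th C g rho F \<Omega> n = (\<Sum>K\<in>adaquad_P th C g rho F \<Omega> n. indicator_eta F K)"

end

theory Submission
  imports Defs
begin

definition zr :: "nat \<Rightarrow> (nat \<Rightarrow> nat) \<Rightarrow> (nat \<Rightarrow> nat \<Rightarrow> nat \<Rightarrow> real) \<Rightarrow> (nat \<Rightarrow> nat \<Rightarrow> real)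
    \<Rightarrow> (real \<Rightarrow> real) \<Rightarrow> (nat \<Rightarrow> real) \<Rightarrow> nat \<Rightarrow> real" where
  "zr k d W b s u i = (\<Sum>j<d k. W k i j * nn_x k d W b s u j) + b k i"

lemma nn_x_Suc': "nn_x (Suc k) d W b s u i = s (zr k d W b s u i)"
  by (simp add: zr_def)

lemma nn_eval_zr: "nn_eval L d W b s u i = zr L d W b s u i"
  by (simp add: zr_def nn_eval_def)

fun dxf :: "nat \<Rightarrow> (nat \<Rightarrow> nat) \<Rightarrow> (nat \<Rightarrow> nat \<Rightarrow> nat \<Rightarrow> real) \<Rightarrow> (nat \<Rightarrow> nat \<Rightarrow> real)
    \<Rightarrow> (real \<Rightarrow> real) \<Rightarrow> (real \<Rightarrow> real) \<Rightarrow> nat \<Rightarrow> (nat \<Rightarrow> real) \<Rightarrow> nat \<Rightarrow> real" where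
  "dxf 0 d W b s s' j0 u i = (if i = j0 then 1 else 0)"
| "dxf (Suc k) d W b s s' j0 u i = s' (zr k d W b s u i) * (\<Sum>j<d k. W k i j * dxf k d W b s s' j0 u j)"

lemma nn_x_deriv:
  assumes sd: "\<forall>x. (s has_real_derivative s' x) (at x)"
  shows "((\<lambda>t. nn_x k d W b s (u(j0:=t)) i) has_real_derivative dxf k d W b s s' j0 (u(j0:=t)) i) (at t)"
proof (induction k arbitrary: i)
  case 0
  show ?case
  proof (cases "i = j0")
    case True
    then show ?thesis by (simp add: DERIV_ident)
  next
    case False
    then show ?thesis by simp
  qed
next
  case (Suc k)
  have z: "((\<lambda>t. zr k d W b s (u(j0:=t)) i) has_real_derivative
      (\<Sum>j<d k. W k i j * dxf k d W b s s' j0 (u(j0:=t)) j)) (at t)"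
    unfolding zr_def
  proof (rule DERIV_add[where E=0, simplified])
    show "((\<lambda>t. \<Sum>j<d k. W k i j * nn_x k d W b s (u(j0 := t)) j) has_real_derivative
      (\<Sum>j<d k. W k i j * dxf k d W b s s' j0 (u(j0:=t)) j)) (at t)"
      by (rule DERIV_sum, rule DERIV_cmult, rule Suc.IH)
  qed simp
  show ?case
    unfolding nn_x_Suc' dxf.simps
    using DERIV_chain2[OF sd[rule_format] z] by simp
qed

lemma partial_nn_eval:
  assumes sd: "\<forall>x. (s has_real_derivative s' x) (at x)"
  shows "partial (\<lambda>y. nn_eval L d W b s y i) j0 u = (\<Sum>j<d L. W L i j * dxf L d W b s s' j0 u j)"
proof -
  have "((\<lambda>t. nn_eval L d W b s (u(j0:=t)) i) has_real_derivative
      (\<Sum>j<d L. W L i j * dxf L d W b s s' j0 (u(j0:=t)) j)) (at t)" for t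
    unfolding nn_eval_def
    by (auto intro!: derivative_eq_intros DERIV_sum DERIV_cmult nn_x_deriv[OF sd] simp: mult.commute)
  from DERIV_imp_deriv[OF this[of "u j0"]] show ?thesis
    unfolding partial_def by simp
qed

section \<open>continuity\<close>

lemma cont_nn:
  assumes cs: "continuous_on UNIV s" and cs': "continuous_on UNIV s'"
  shows "continuous_on UNIV (\<lambda>u. nn_x k d W b s u i) \<and> continuous_on UNIV (\<lambda>u. dxf k d W b s s' j0 u i)"
proof (induction k arbitrary: i)
  case 0
  then show ?case by (simp add: continuous_on_product_coordinates)
next
  case (Suc k)
  have cz: "continuous_on UNIV (\<lambda>u. zr k d W b s u i)" for i
    unfolding zr_def using Suc.IH
    by (auto intro!: continuous_intros)
  have 1: "continuous_on UNIV (\<lambda>u. s (zr k d W b s u i))"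
    using continuous_on_compose2[OF cs cz] by simp
  have 2: "continuous_on UNIV (\<lambda>u. s' (zr k d W b s u i))"
    using continuous_on_compose2[OF cs' cz] by simp
  show ?case unfolding nn_x_Suc' dxf.simps
    using 1 2 Suc.IH by (auto intro!: continuous_intros)
qed

lemma cont_f:
  assumes sd: "\<forall>x. (s has_real_derivative s' x) (at x)"
    and cs': "continuous_on UNIV s'" and p: "0 < p"
  shows "continuous_on UNIV (f_W1p L d W b s p)"
proof -
  have cs: "continuous_on UNIV s"
    using sd by (meson DERIV_isCont continuous_at_imp_continuous_on)
  have ce: "continuous_on UNIV (\<lambda>u. nn_eval L d W b s u i)" for i
    unfolding nn_eval_def using cont_nn[OF cs cs'] by (auto intro!: continuous_intros)
  have cp: "continuous_on UNIV (\<lambda>u. partial (\<lambda>y. nn_eval L d W b s y i) j u)" for i j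
    unfolding partial_nn_eval[OF sd] using cont_nn[OF cs cs'] by (auto intro!: continuous_intros)
  have pw: "continuous_on UNIV (\<lambda>u. \<bar>g u\<bar> powr p)" if "continuous_on UNIV g" for g :: "(nat \<Rightarrow> real) \<Rightarrow> real"
    using that p by (intro continuous_on_powr' continuous_intros) auto
  show ?thesis
    unfolding f_W1p_def[abs_def]
    by (intro continuous_on_sum continuous_on_add pw ce cp)
qed

definition rmatmul :: "nat \<Rightarrow> (nat \<Rightarrow> nat \<Rightarrow> real) \<Rightarrow> (nat \<Rightarrow> nat \<Rightarrow> real) \<Rightarrow> nat \<Rightarrow> nat \<Rightarrow> real" where
  "rmatmul n A B = (\<lambda>i j. \<Sum>l<n. A i l * B l j)"

definition rdiag :: "(nat \<Rightarrow> real) \<Rightarrow> nat \<Rightarrow> nat \<Rightarrow> real" where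
  "rdiag D = (\<lambda>i j. if i = j then D i else 0)"

fun jr :: "nat \<Rightarrow> nat \<Rightarrow> (nat \<Rightarrow> nat) \<Rightarrow> (nat \<Rightarrow> nat \<Rightarrow> nat \<Rightarrow> real) \<Rightarrow> (nat \<Rightarrow> nat \<Rightarrow> real)
    \<Rightarrow> (real \<Rightarrow> real) \<Rightarrow> (real \<Rightarrow> real) \<Rightarrow> (nat \<Rightarrow> real) \<Rightarrow> nat \<Rightarrow> nat \<Rightarrow> real" where
  "jr 0 L d W b s s' u = W L"
| "jr (Suc n) L d W b s s' u =
     (let k = L - Suc n in
      rmatmul (d (Suc k))
        (rmatmul (d (Suc k)) (jr n L d W b s s' u) (rdiag (\<lambda>i. s' (zr k d W b s u i))))
        (W k))"

lemma rmatmul_rdiag: "rmatmul n A (rdiag D) i m = (if m < n then A i m * D m else 0)"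
  unfolding rmatmul_def rdiag_def
  by (simp add: if_distrib[of "\<lambda>x. A i _ * x"] sum.delta' cong: if_cong)

lemma jr_dxf:
  assumes "n \<le> L"
  shows "(\<Sum>l<d (L - n). jr n L d W b s s' u i l * dxf (L - n) d W b s s' j0 u l)
       = (\<Sum>l<d L. W L i l * dxf L d W b s s' j0 u l)"
  using assms
proof (induction n)
  case 0
  then show ?case by simp
next
  case (Suc n)
  define k where "k = L - Suc n"
  have Lk: "L - n = Suc k" using Suc.prems unfolding k_def by simp
  have "(\<Sum>l<d k. jr (Suc n) L d W b s s' u i l * dxf k d W b s s' j0 u l)
      = (\<Sum>l<d k. (\<Sum>m<d (Suc k). jr n L d W b s s' u i m * s' (zr k d W b s u m) * W k m l) * dxf k d W b s s' j0 u l)"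
    by (simp add: k_def[symmetric] Let_def rmatmul_def[of _ _ "W k"] rmatmul_rdiag)
  also have "\<dots> = (\<Sum>m<d (Suc k). jr n L d W b s s' u i m * s' (zr k d W b s u m) * (\<Sum>l<d k. W k m l * dxf k d W b s s' j0 u l))"
    by (simp add: sum_distrib_left sum_distrib_right sum.swap[of _ "{..<d k}"] mult.assoc)
  also have "\<dots> = (\<Sum>m<d (L - n). jr n L d W b s s' u i m * dxf (L - n) d W b s s' j0 u m)"
    by (simp add: Lk mult.assoc)
  also have "\<dots> = (\<Sum>l<d L. W L i l * dxf L d W b s s' j0 u l)"
    using Suc by simp
  finally show ?case by (simp add: k_def)
qed

lemma partial_jr:
  assumes sd: "\<forall>x. (s has_real_derivative s' x) (at x)" and j0: "j0 < d 0"
  shows "partial (\<lambda>y. nn_eval L d W b s y i) j0 u = jr L L d W b s s' u i j0"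
proof -
  have "partial (\<lambda>y. nn_eval L d W b s y i) j0 u
      = (\<Sum>l<d (L - L). jr L L d W b s s' u i l * dxf (L - L) d W b s s' j0 u l)"
    unfolding partial_nn_eval[OF sd] by (rule jr_dxf[symmetric]) simp
  also have "\<dots> = jr L L d W b s s' u i j0"
    using j0 by (simp add: if_distrib[of "\<lambda>x. _ * x"] sum.delta' cong: if_cong)
  finally show ?thesis .
qed


lemma hoelder_cont:
  assumes E: "ivl_enclosure s S" and H: "ivl_hoelder S"
  shows "continuous_on UNIV s"
proof -
  obtain C g where Cg: "C > 0" "0 < g" "g \<le> 1" "\<And>X. width (S X) \<le> C * width X powr g"
    using H unfolding ivl_hoelder_def by blast
  have b: "\<bar>s y - s x\<bar> \<le> C * \<bar>y - x\<bar> powr g" for x y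
  proof -
    define X where "X = Ivl (min x y) (max x y)"
    have sX: "set_of X = {min x y .. max x y}" unfolding X_def set_of_eq
      by (simp add: Ivl.rep_eq lower.rep_eq upper.rep_eq)
    have wX: "width X = \<bar>y - x\<bar>" unfolding width_def X_def
      by (simp add: Ivl.rep_eq lower.rep_eq upper.rep_eq)
    have "s x \<in> set_of (S X)" "s y \<in> set_of (S X)"
    proof -
      have "s ` set_of X \<subseteq> set_of (S X)" using E unfolding ivl_enclosure_def by blast
      moreover have "x \<in> set_of X" "y \<in> set_of X" using sX by auto
      ultimately show "s x \<in> set_of (S X)" "s y \<in> set_of (S X)" by auto
    qed
    then have "\<bar>s y - s x\<bar> \<le> width (S X)" unfolding set_of_eq width_def by auto
    also have "\<dots> \<le> C * \<bar>y - x\<bar> powr g" using Cg(4)[of X] wX by simp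
    finally show ?thesis .
  qed
  have "isCont s x" for x
  proof -
    have "continuous_on UNIV (\<lambda>y. C * \<bar>y - x\<bar> powr g)"
      using Cg by (intro continuous_intros continuous_on_powr') auto
    then have "((\<lambda>y. C * \<bar>y - x\<bar> powr g) \<longlongrightarrow> C * \<bar>x - x\<bar> powr g) (at x)"
      by (metis UNIV_I continuous_on_def at_within_open open_UNIV)
    then have t0: "((\<lambda>y. C * \<bar>y - x\<bar> powr g) \<longlongrightarrow> 0) (at x)" using Cg by simp
    have "((\<lambda>y. s y - s x) \<longlongrightarrow> 0) (at x)"
      by (rule Lim_null_comparison[OF _ t0]) (use b in auto)
    then show ?thesis unfolding isCont_def using LIM_zero_cancel by blast
  qed
  then show ?thesis by (simp add: continuous_at_imp_continuous_on)
qed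


lemma sum_in_interval:
  fixes f :: "'b \<Rightarrow> real"
  assumes "\<And>i. i \<in> A \<Longrightarrow> f i \<in> set_of (F i)"
  shows "sum f A \<in> set_of (sum F A)"
  using assms
proof (induction A rule: infinite_finite_induct)
  case (infinite A)
  then show ?case by (simp add: set_of_eq)
next
  case empty
  then show ?case by (simp add: set_of_eq)
next
  case (insert x F)
  then show ?case by (simp add: plus_in_intervalI)
qed

lemma sum_interval_mono:
  fixes F G :: "'b \<Rightarrow> real interval"
  assumes "\<And>i. i \<in> A \<Longrightarrow> set_of (F i) \<subseteq> set_of (G i)"
  shows "set_of (sum F A) \<subseteq> set_of (sum G A)"
  using assms
proof (induction A rule: infinite_finite_induct)
  case (insert x F)
  then show ?case by (simp add: set_of_add_inc)
qed auto

lemma abs_interval_mono: "set_of X \<subseteq> set_of Y \<Longrightarrow> set_of (abs_interval X) \<subseteq> set_of (abs_interval Y)"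
  for X Y :: "real interval"
  unfolding set_of_abs_interval by blast

lemma lower_abs_nonneg: "0 \<le> lower (abs_interval (X::real interval))"
  by auto

lemma lower_Ivl: "lower (Ivl a b) = min a (b::real)" and upper_Ivl: "upper (Ivl a b) = b"
  by (simp_all add: Ivl.rep_eq lower.rep_eq upper.rep_eq)

lemma set_of_ipowr: "0 \<le> lower X \<Longrightarrow> 0 \<le> p \<Longrightarrow> set_of (ipowr X p) = {lower X powr p .. upper X powr p}"
proof -
  assume a: "0 \<le> lower X" "0 \<le> p"
  have "lower X powr p \<le> upper X powr p" by (rule powr_mono2[OF a(2) a(1) lower_le_upper])
  then show ?thesis unfolding ipowr_def set_of_eq by (simp add: lower_Ivl upper_Ivl)
qed

lemma ipowr_mono:
  assumes "0 \<le> lower X" "0 \<le> p" "set_of X \<subseteq> set_of Y" "0 \<le> lower Y"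
  shows "set_of (ipowr X p) \<subseteq> set_of (ipowr Y p)"
proof -
  have "lower Y \<le> lower X" "upper X \<le> upper Y" using assms(3) lower_le_upper[of X]
    unfolding set_of_eq by auto
  moreover have "lower Y powr p \<le> lower X powr p" by (rule powr_mono2) (use assms \<open>lower Y \<le> lower X\<close> in auto)
  moreover have "upper X powr p \<le> upper Y powr p"
    by (rule powr_mono2) (use assms \<open>upper X \<le> upper Y\<close> order_trans[OF _ lower_le_upper[of X]] in auto)
  ultimately show ?thesis using assms by (auto simp: set_of_ipowr)
qed

lemma in_ipowr_abs: "x \<in> set_of X \<Longrightarrow> 0 \<le> p \<Longrightarrow> \<bar>x\<bar> powr p \<in> set_of (ipowr (abs_interval X) p)"
proof -
  assume x: "x \<in> set_of X" and p: "0 \<le> p"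
  have "\<bar>x\<bar> \<in> set_of (abs_interval X)" using x by (simp add: set_of_abs_interval)
  then have "lower (abs_interval X) \<le> \<bar>x\<bar>" "\<bar>x\<bar> \<le> upper (abs_interval X)" unfolding set_of_eq by auto
  moreover have "lower (abs_interval X) powr p \<le> \<bar>x\<bar> powr p"
    by (rule powr_mono2[OF p lower_abs_nonneg]) (use calculation in simp)
  moreover have "\<bar>x\<bar> powr p \<le> upper (abs_interval X) powr p"
    by (rule powr_mono2[OF p]) (use calculation in simp_all)
  ultimately show ?thesis using p
    by (simp add: set_of_ipowr[OF lower_abs_nonneg p] del: lower_abs_interval upper_abs_interval)
qed

lemma ipowr_abs_mono: "set_of X \<subseteq> set_of Y \<Longrightarrow> 0 \<le> p \<Longrightarrow>
    set_of (ipowr (abs_interval X) p) \<subseteq> set_of (ipowr (abs_interval Y) p)"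
  by (rule ipowr_mono[OF lower_abs_nonneg _ abs_interval_mono lower_abs_nonneg])

section \<open>enclosure of forward pass\<close>

lemma idx_aux: "i < d k \<Longrightarrow> 0 < k \<or> i < d (0::nat)" by (cases k) auto

lemma ival_x_Suc': "ival_x (Suc k) d W b S K i = S (Fval (Suc k) d W b S K i)"
  by simp

lemma ival_x_encl:
  assumes S: "ivl_enclosure s S" and u: "in_box u K" and len: "length K = d 0"
    and j: "0 < k \<or> j < d 0"
  shows "nn_x k d W b s u j \<in> set_of (ival_x k d W b S K j)"
  using j
proof (induction k arbitrary: j)
  case 0
  then show ?case using u len unfolding in_box_def by simp
next
  case (Suc k)
  have "zr k d W b s u j \<in> set_of (Fval (Suc k) d W b S K j)"
    unfolding zr_def Fval.simps
    by (intro plus_in_intervalI sum_in_interval times_in_intervalI) (auto intro!: Suc.IH idx_aux)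
  moreover have enc: "\<And>a X. a \<in> set_of X \<Longrightarrow> s a \<in> set_of (S X)"
    using S unfolding ivl_enclosure_def by blast
  ultimately show ?case unfolding nn_x_Suc' ival_x_Suc' by blast
qed

lemma Fval_encl:
  assumes S: "ivl_enclosure s S" and u: "in_box u K" and len: "length K = d 0"
  shows "zr k d W b s u i \<in> set_of (Fval (Suc k) d W b S K i)"
  unfolding zr_def Fval.simps
  by (intro plus_in_intervalI sum_in_interval times_in_intervalI)
     (auto intro!: ival_x_encl[where d=d, OF S u len] idx_aux)

lemma iso_S: "ivl_enclosure s S \<Longrightarrow> set_of X \<subseteq> set_of Y \<Longrightarrow> set_of (S X) \<subseteq> set_of (S Y)"
  unfolding ivl_enclosure_def by blast

lemma enc_S: "ivl_enclosure s S \<Longrightarrow> a \<in> set_of X \<Longrightarrow> s a \<in> set_of (S X)"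
  unfolding ivl_enclosure_def by blast

lemma ival_x_mono:
  assumes S: "ivl_enclosure s S" and sub: "subbox K K'" and len: "length K = d 0"
    and j: "0 < k \<or> j < d 0"
  shows "set_of (ival_x k d W b S K j) \<subseteq> set_of (ival_x k d W b S K' j)"
  using j
proof (induction k arbitrary: j)
  case 0
  then show ?case using sub len unfolding subbox_def by simp
next
  case (Suc k)
  have "set_of (Fval (Suc k) d W b S K j) \<subseteq> set_of (Fval (Suc k) d W b S K' j)"
    unfolding Fval.simps
    by (intro set_of_add_inc sum_interval_mono set_of_mul_inc order_refl Suc.IH idx_aux) auto
  then show ?case unfolding ival_x_Suc' by (rule iso_S[OF S])
qed

lemma Fval_mono:
  assumes S: "ivl_enclosure s S" and sub: "subbox K K'" and len: "length K = d 0"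
  shows "set_of (Fval (Suc k) d W b S K i) \<subseteq> set_of (Fval (Suc k) d W b S K' i)"
  unfolding Fval.simps
  by (intro set_of_add_inc sum_interval_mono set_of_mul_inc order_refl ival_x_mono[where d=d, OF S sub len] idx_aux) auto

section \<open>Jacobian enclosure\<close>

lemma imatmul_encl:
  assumes "\<And>i j. A i j \<in> set_of (AA i j)" "\<And>i j. B i j \<in> set_of (BB i j)"
  shows "rmatmul n A B i j \<in> set_of (imatmul n AA BB i j)"
  unfolding rmatmul_def imatmul_def
  by (intro sum_in_interval times_in_intervalI assms)

lemma imatmul_mono:
  assumes "\<And>i j. set_of (A i j) \<subseteq> set_of (AA i j)" "\<And>i j. set_of (B i j) \<subseteq> set_of (BB i j)"
  shows "set_of (imatmul n A B i j) \<subseteq> set_of (imatmul n AA BB i j)"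
  unfolding imatmul_def
  by (intro sum_interval_mono set_of_mul_inc assms)

lemma idiag_encl:
  assumes "\<And>i. D i \<in> set_of (DD i)"
  shows "rdiag D i j \<in> set_of (idiag DD i j)"
  using assms unfolding rdiag_def idiag_def by (simp add: set_of_eq)

lemma idiag_mono:
  assumes "\<And>i. set_of (D i) \<subseteq> set_of (DD i)"
  shows "set_of (idiag D i j) \<subseteq> set_of (idiag DD i j)"
  using assms unfolding idiag_def by simp

lemma ipoint_encl: "M i j \<in> set_of (ipoint_mat M i j)"
  unfolding ipoint_mat_def by (simp add: set_of_eq)

lemma jac_encl:
  assumes S: "ivl_enclosure s S" and S': "ivl_enclosure s' S'" and u: "in_box u K" and len: "length K = d 0"
  shows "jr n L d W b s s' u i j \<in> set_of (jac_rec n L d W b S S' K i j)"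
proof (induction n arbitrary: i j)
  case 0
  then show ?case by (simp add: ipoint_encl)
next
  case (Suc n)
  show ?case
    unfolding jr.simps jac_rec.simps Let_def
    by (intro imatmul_encl idiag_encl ipoint_encl Suc.IH enc_S[OF S'] Fval_encl[where d=d, OF S u len])
qed

lemma jac_mono:
  assumes S: "ivl_enclosure s S" and S': "ivl_enclosure s' S'" and sub: "subbox K K'" and len: "length K = d 0"
  shows "set_of (jac_rec n L d W b S S' K i j) \<subseteq> set_of (jac_rec n L d W b S S' K' i j)"
proof (induction n arbitrary: i j)
  case 0
  then show ?case by simp
next
  case (Suc n)
  show ?case
    unfolding jac_rec.simps Let_def
    by (intro imatmul_mono idiag_mono order_refl Suc.IH iso_S[OF S'] Fval_mono[where d=d, OF S sub len])
qed

lemma F_encl: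
  assumes sd: "\<forall>x. (s has_real_derivative s' x) (at x)" and p: "0 \<le> p"
    and S: "ivl_enclosure s S" and S': "ivl_enclosure s' S'" and u: "in_box u K" and len: "length K = d 0"
  shows "f_W1p L d W b s p u \<in> set_of (F_W1p L d W b S S' p K)"
proof -
  have e1: "nn_eval L d W b s u i \<in> set_of (Fval (Suc L) d W b S K i)" for i
    unfolding nn_eval_zr by (rule Fval_encl[where d=d, OF S u len])
  have e2: "partial (\<lambda>y. nn_eval L d W b s y i) j u \<in> set_of (jac_rec L L d W b S S' K i j)"
    if "j < d 0" for i j
    unfolding partial_jr[where d=d, OF sd that] by (rule jac_encl[where d=d, OF S S' u len])
  show ?thesis
    unfolding f_W1p_def F_W1p_def Jac_def diff_zero
    by (intro sum_in_interval plus_in_intervalI in_ipowr_abs p e1 e2) auto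
qed

lemma F_mono:
  assumes p: "0 \<le> p"
    and S: "ivl_enclosure s S" and S': "ivl_enclosure s' S'" and sub: "subbox K K'" and len: "length K = d 0"
  shows "set_of (F_W1p L d W b S S' p K) \<subseteq> set_of (F_W1p L d W b S S' p K')"
  unfolding F_W1p_def Jac_def
  by (intro sum_interval_mono set_of_add_inc ipowr_abs_mono p Fval_mono[where d=d, OF S sub len] jac_mono[where d=d, OF S S' sub len])

lemma F_box_enclosure:
  assumes sd: "\<forall>x. (s has_real_derivative s' x) (at x)" and p: "0 \<le> p"
    and S: "ivl_enclosure s S" and S': "ivl_enclosure s' S'" and len: "length \<Omega> = d 0"
  shows "box_enclosure \<Omega> (f_W1p L d W b s p) (F_W1p L d W b S S' p)"
  unfolding box_enclosure_def
proof safe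
  fix K K' assume "subbox K K'" "subbox K' \<Omega>"
  moreover then have "length K = d 0" using len unfolding subbox_def by simp
  ultimately show "x \<in> set_of (F_W1p L d W b S S' p K) \<Longrightarrow> x \<in> set_of (F_W1p L d W b S S' p K')" for x
    using F_mono[OF p S S'] by blast
next
  fix K x assume "subbox K \<Omega>" "in_box x K"
  moreover then have "length K = d 0" using len unfolding subbox_def by simp
  ultimately show "f_W1p L d W b s p x \<in> set_of (F_W1p L d W b S S' p K)"
    using F_encl[OF sd p S S'] by blast
qed


section \<open>Hoelder closure\<close>

definition hold :: "box \<Rightarrow> (box \<Rightarrow> ivl) \<Rightarrow> bool" where
  "hold \<Omega> G \<longleftrightarrow> (\<exists>C g. 0 \<le> C \<and> 0 < g \<and> g \<le> 1 \<and>
      (\<forall>K. subbox K \<Omega> \<longrightarrow> width (G K) \<le> C * box_width K powr g))"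

definition iso :: "box \<Rightarrow> (box \<Rightarrow> ivl) \<Rightarrow> bool" where
  "iso \<Omega> G \<longleftrightarrow> (\<forall>K. subbox K \<Omega> \<longrightarrow> set_of (G K) \<subseteq> set_of (G \<Omega>))"

definition good :: "box \<Rightarrow> (box \<Rightarrow> ivl) \<Rightarrow> bool" where
  "good \<Omega> G \<longleftrightarrow> hold \<Omega> G \<and> iso \<Omega> G"

definition mag :: "real interval \<Rightarrow> real" where
  "mag X = max \<bar>lower X\<bar> \<bar>upper X\<bar>"

lemma width_nonneg: "0 \<le> width (X::real interval)"
  unfolding width_def by simp

lemma mag_ge: "x \<in> set_of X \<Longrightarrow> \<bar>x\<bar> \<le> mag X"
  unfolding mag_def set_of_eq by auto

lemma mag_mono: "set_of X \<subseteq> set_of Y \<Longrightarrow> mag X \<le> mag Y"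
proof -
  assume a: "set_of X \<subseteq> set_of Y"
  have "lower X \<in> set_of X" "upper X \<in> set_of X" by (auto simp: set_of_eq)
  then have "lower X \<in> set_of Y" "upper X \<in> set_of Y" using a by blast+
  then show ?thesis unfolding mag_def[of X] by (intro max.boundedI mag_ge)
qed

lemma mag_nonneg: "0 \<le> mag X" unfolding mag_def by simp

lemma subbox_refl: "subbox K K" unfolding subbox_def by simp

lemma subbox_len: "subbox K \<Omega> \<Longrightarrow> length K = length \<Omega>" unfolding subbox_def by simp

lemma side_le_bw: "j < length K \<Longrightarrow> width (K ! j) \<le> box_width K"
  unfolding box_width_def by (rule Max_ge) auto

lemma bw_nonneg: "K \<noteq> [] \<Longrightarrow> 0 \<le> box_width K"
  using side_le_bw[of 0 K] width_nonneg[of "K ! 0"] by simp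

lemma width_mono: "set_of X \<subseteq> set_of Y \<Longrightarrow> width X \<le> width (Y::real interval)"
proof -
  assume a: "set_of X \<subseteq> set_of Y"
  have "lower X \<in> set_of X" "upper X \<in> set_of X" by (auto simp: set_of_eq)
  then have "lower X \<in> set_of Y" "upper X \<in> set_of Y" using a by blast+
  then show ?thesis unfolding width_def set_of_eq by simp
qed

lemma bw_le: assumes "subbox K \<Omega>" "\<Omega> \<noteq> []" shows "box_width K \<le> box_width \<Omega>"
proof -
  have "width (K ! j) \<le> box_width \<Omega>" if "j < length K" for j
  proof -
    have "set_of (K!j) \<subseteq> set_of (\<Omega>!j)" "j < length \<Omega>" using assms(1) that unfolding subbox_def by auto
    then show ?thesis by (meson order_trans width_mono side_le_bw)
  qed
  then show ?thesis unfolding box_width_def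
    using assms subbox_len[OF assms(1)]
    by (intro Max.boundedI) (auto simp: in_set_conv_nth)
qed

lemma powr_unify:
  fixes w D g g1 :: real
  assumes "0 \<le> w" "w \<le> D" "0 < g" "g \<le> g1" "g1 \<le> g + 1"
  shows "w powr g1 \<le> max 1 D * w powr g"
proof (cases "w = 0")
  case True
  then show ?thesis using assms by simp
next
  case False
  then have wp: "0 < w" using assms by simp
  have "w powr g1 = w powr (g1 - g) * w powr g" by (simp add: powr_add[symmetric])
  also have "w powr (g1 - g) \<le> max 1 D powr (g1 - g)"
    by (rule powr_mono2) (use assms wp in auto)
  also have "max 1 D powr (g1 - g) \<le> max 1 D powr 1"
    by (rule powr_mono) (use assms in auto)
  finally show ?thesis using wp by (simp add: mult_right_mono)
qed

lemma in_set_of_times_ex: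
  fixes X Y :: "real interval"
  assumes "z \<in> set_of (X * Y)"
  obtains a b where "a \<in> set_of X" "b \<in> set_of Y" "z = a * b"
  using assms unfolding set_of_times by blast

lemma lower_upper_in: "lower X \<in> set_of X" "upper X \<in> set_of X"
  by (auto simp: set_of_eq)

lemma width_times: "width (X * Y) \<le> mag X * width Y + mag Y * width (X::real interval)"
proof -
  obtain a b where ab: "a \<in> set_of X" "b \<in> set_of Y" "upper (X * Y) = a * b"
    using in_set_of_times_ex[OF lower_upper_in(2)] by metis
  obtain c e where ce: "c \<in> set_of X" "e \<in> set_of Y" "lower (X * Y) = c * e"
    using in_set_of_times_ex[OF lower_upper_in(1)] by metis
  have "width (X * Y) = a * (b - e) + e * (a - c)" unfolding width_def ab ce by (simp add: algebra_simps)
  also have "\<dots> \<le> \<bar>a\<bar> * \<bar>b - e\<bar> + \<bar>e\<bar> * \<bar>a - c\<bar>"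
    by (intro add_mono) (auto simp: abs_mult[symmetric])
  also have "\<dots> \<le> mag X * width Y + mag Y * width X"
  proof (intro add_mono mult_mono)
    show "\<bar>a\<bar> \<le> mag X" "\<bar>e\<bar> \<le> mag Y" using ab ce by (auto intro: mag_ge)
    show "\<bar>b - e\<bar> \<le> width Y" "\<bar>a - c\<bar> \<le> width X" using ab ce unfolding width_def set_of_eq by auto
  qed (auto simp: mag_nonneg)
  finally show ?thesis .
qed

lemma width_abs_interval: "width (abs_interval X) \<le> width (X::real interval)"
proof -
  have "upper (abs_interval X) \<in> abs ` set_of X" "lower (abs_interval X) \<in> abs ` set_of X"
    using lower_upper_in[of "abs_interval X"] by (simp_all only: set_of_abs_interval)
  then obtain a c where "a \<in> set_of X" "c \<in> set_of X" "upper (abs_interval X) = \<bar>a\<bar>" "lower (abs_interval X) = \<bar>c\<bar>"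
    by (metis imageE)
  moreover then have "\<bar>a - c\<bar> \<le> width X" unfolding width_def set_of_eq by auto
  moreover have "\<bar>a\<bar> - \<bar>c\<bar> \<le> \<bar>a - c\<bar>" by linarith
  ultimately show ?thesis unfolding width_def[of "abs_interval X"] by linarith
qed

lemma powr_diff_le:
  fixes l u M p :: real
  assumes "0 \<le> l" "l \<le> u" "u \<le> M" "1 \<le> p"
  shows "u powr p - l powr p \<le> p * M powr (p - 1) * (u - l)"
proof (cases "l = u")
  case True
  then show ?thesis by simp
next
  case False
  then have lu: "l < u" using assms by simp
  have c: "continuous_on {l..u} (\<lambda>t. t powr p)"
    using assms by (intro continuous_on_powr' continuous_intros) auto
  have dd: "(\<lambda>t. t powr p) differentiable at x" if "l < x" "x < u" for x
    using has_real_derivative_powr[of x p] that assms real_differentiable_def by fastforce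
  obtain f z where z: "l < z" "z < u" "((\<lambda>t. t powr p) has_real_derivative f) (at z)"
      "u powr p - l powr p = (u - l) * f"
    using MVT[OF lu c dd] by blast
  have "f = p * z powr (p - 1)"
    using DERIV_unique[OF z(3) has_real_derivative_powr[of z p]] z assms by simp
  moreover have "z powr (p - 1) \<le> M powr (p - 1)"
    by (rule powr_mono2) (use assms z in auto)
  ultimately show ?thesis using z lu assms by (simp add: mult_left_mono mult.commute mult.left_commute)
qed

lemma width_ipowr_abs:
  assumes p: "1 \<le> p" and m: "upper (abs_interval X) \<le> M"
  shows "width (ipowr (abs_interval X) p) \<le> p * M powr (p - 1) * width (abs_interval X)"
proof -
  have "width (ipowr (abs_interval X) p) = upper (abs_interval X) powr p - lower (abs_interval X) powr p"
    unfolding width_def ipowr_def using powr_mono2[OF _ lower_abs_nonneg lower_le_upper, of p "X"] p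
    by (simp add: lower_Ivl upper_Ivl del: lower_abs_interval upper_abs_interval)
  also have "\<dots> \<le> p * M powr (p - 1) * width (abs_interval X)"
    unfolding width_def[of "abs_interval X"]
    by (rule powr_diff_le[OF lower_abs_nonneg lower_le_upper m p])
  finally show ?thesis .
qed

context
  fixes \<Omega> :: box
  assumes ne: "\<Omega> \<noteq> []"
begin

lemma holdI':
  assumes "0 \<le> C" "0 < g" "g \<le> 1" "\<And>K. subbox K \<Omega> \<Longrightarrow> width (G K) \<le> C * box_width K powr g"
  shows "hold \<Omega> G"
  using assms unfolding hold_def by blast

lemma hold_mono_exp:
  assumes "0 \<le> C" "0 < g" "g \<le> g1" "g1 \<le> 1" "subbox K \<Omega>"
  shows "C * box_width K powr g1 \<le> (C * max 1 (box_width \<Omega>)) * box_width K powr g"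
proof -
  have "box_width K powr g1 \<le> max 1 (box_width \<Omega>) * box_width K powr g"
  proof (rule powr_unify)
    have "K \<noteq> []" using subbox_len[OF assms(5)] ne by auto
    then show "0 \<le> box_width K" by (rule bw_nonneg)
    show "box_width K \<le> box_width \<Omega>" by (rule bw_le[OF assms(5) ne])
  qed (use assms in auto)
  then show ?thesis using assms(1) by (simp add: mult_left_mono mult.assoc)
qed

lemma good_const: "good \<Omega> (\<lambda>K. interval_of c)"
  unfolding good_def iso_def
  by (auto intro!: holdI'[of 0 1] simp: width_def)

lemma good_side: "j < length \<Omega> \<Longrightarrow> good \<Omega> (\<lambda>K. K ! j)"
  unfolding good_def iso_def
proof safe
  assume j: "j < length \<Omega>"
  show "hold \<Omega> (\<lambda>K. K ! j)"
  proof (rule holdI'[of 1 1])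
    fix K assume "subbox K \<Omega>"
    then have "j < length K" using j subbox_len by simp
    moreover have "K \<noteq> []" using \<open>subbox K \<Omega>\<close> ne subbox_len by fastforce
    then have "0 \<le> box_width K" by (rule bw_nonneg)
    ultimately show "width (K ! j) \<le> 1 * box_width K powr 1" using side_le_bw by simp
  qed auto
next
  fix K x assume "j < length \<Omega>" "subbox K \<Omega>" "x \<in> set_of (K ! j)"
  then show "x \<in> set_of (\<Omega> ! j)" unfolding subbox_def by auto
qed

lemma hold_add:
  assumes "hold \<Omega> G1" "hold \<Omega> G2"
  shows "hold \<Omega> (\<lambda>K. G1 K + G2 K)"
proof -
  obtain C1 g1 where 1: "0 \<le> C1" "0 < g1" "g1 \<le> 1" "\<And>K. subbox K \<Omega> \<Longrightarrow> width (G1 K) \<le> C1 * box_width K powr g1"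
    using assms(1) unfolding hold_def by blast
  obtain C2 g2 where 2: "0 \<le> C2" "0 < g2" "g2 \<le> 1" "\<And>K. subbox K \<Omega> \<Longrightarrow> width (G2 K) \<le> C2 * box_width K powr g2"
    using assms(2) unfolding hold_def by blast
  define g where "g = min g1 g2"
  define M where "M = max 1 (box_width \<Omega>)"
  show ?thesis
  proof (rule holdI'[of "C1 * M + C2 * M" g])
    fix K assume K: "subbox K \<Omega>"
    have "width (G1 K + G2 K) = width (G1 K) + width (G2 K)" unfolding width_def by simp
    also have "\<dots> \<le> C1 * box_width K powr g1 + C2 * box_width K powr g2" using 1 2 K by (simp add: add_mono)
    also have "\<dots> \<le> (C1 * M) * box_width K powr g + (C2 * M) * box_width K powr g"
      unfolding M_def using hold_mono_exp[OF 1(1) _ _ 1(3) K, of g] hold_mono_exp[OF 2(1) _ _ 2(3) K, of g] 1 2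
      by (intro add_mono) (auto simp: g_def)
    finally show "width (G1 K + G2 K) \<le> (C1 * M + C2 * M) * box_width K powr g" by (simp add: algebra_simps)
  qed (use 1 2 in \<open>auto simp: g_def M_def\<close>)
qed

lemma good_add:
  assumes "good \<Omega> G1" "good \<Omega> G2" shows "good \<Omega> (\<lambda>K. G1 K + G2 K)"
  unfolding good_def
proof
  show "hold \<Omega> (\<lambda>K. G1 K + G2 K)" using assms hold_add unfolding good_def by blast
  show "iso \<Omega> (\<lambda>K. G1 K + G2 K)" unfolding iso_def
  proof (intro allI impI)
    fix K assume "subbox K \<Omega>"
    then show "set_of (G1 K + G2 K) \<subseteq> set_of (G1 \<Omega> + G2 \<Omega>)"
      using assms unfolding good_def iso_def by (intro set_of_add_inc) auto
  qed
qed

lemma interval_of_0: "interval_of 0 = (0::real interval)" by (simp add: interval_eq_iff)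

lemma good_sum: "(\<And>i. i \<in> A \<Longrightarrow> good \<Omega> (G i)) \<Longrightarrow> good \<Omega> (\<lambda>K. \<Sum>i\<in>A. G i K)"
proof (induction A rule: infinite_finite_induct)
  case (infinite A)
  then show ?case using good_const[of 0] by (simp add: interval_of_0)
next
  case empty
  then show ?case using good_const[of 0] by (simp add: interval_of_0)
next
  case (insert x F)
  then show ?case by (simp add: good_add)
qed

lemma hold_mul:
  assumes "good \<Omega> G1" "good \<Omega> G2"
  shows "hold \<Omega> (\<lambda>K. G1 K * G2 K)"
proof -
  obtain C1 g1 where 1: "0 \<le> C1" "0 < g1" "g1 \<le> 1" "\<And>K. subbox K \<Omega> \<Longrightarrow> width (G1 K) \<le> C1 * box_width K powr g1"
    using assms(1) unfolding hold_def good_def by blast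
  obtain C2 g2 where 2: "0 \<le> C2" "0 < g2" "g2 \<le> 1" "\<And>K. subbox K \<Omega> \<Longrightarrow> width (G2 K) \<le> C2 * box_width K powr g2"
    using assms(2) unfolding hold_def good_def by blast
  define g where "g = min g1 g2"
  define M where "M = max 1 (box_width \<Omega>)"
  define M1 where "M1 = mag (G1 \<Omega>)"
  define M2 where "M2 = mag (G2 \<Omega>)"
  have M12: "0 \<le> M1" "0 \<le> M2" unfolding M1_def M2_def by (simp_all add: mag_nonneg)
  show ?thesis
  proof (rule holdI'[of "M2 * (C1 * M) + M1 * (C2 * M)" g])
    fix K assume K: "subbox K \<Omega>"
    have m1: "mag (G1 K) \<le> M1" using assms(1) K unfolding good_def iso_def M1_def by (simp add: mag_mono)
    have m2: "mag (G2 K) \<le> M2" using assms(2) K unfolding good_def iso_def M2_def by (simp add: mag_mono)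
    have "width (G1 K * G2 K) \<le> mag (G1 K) * width (G2 K) + mag (G2 K) * width (G1 K)"
      by (rule width_times)
    also have "\<dots> \<le> M1 * (C2 * box_width K powr g2) + M2 * (C1 * box_width K powr g1)"
      using m1 m2 1(4)[OF K] 2(4)[OF K] M12
      by (intro add_mono mult_mono) (auto simp: width_nonneg mag_nonneg)
    also have "\<dots> \<le> M1 * ((C2 * M) * box_width K powr g) + M2 * ((C1 * M) * box_width K powr g)"
      unfolding M_def using hold_mono_exp[OF 1(1) _ _ 1(3) K, of g] hold_mono_exp[OF 2(1) _ _ 2(3) K, of g] 1 2 M12
      by (intro add_mono mult_left_mono) (auto simp: g_def)
    finally show "width (G1 K * G2 K) \<le> (M2 * (C1 * M) + M1 * (C2 * M)) * box_width K powr g"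
      by (simp add: algebra_simps)
  qed (use 1 2 M12 in \<open>auto simp: g_def M_def\<close>)
qed

lemma good_mul: assumes "good \<Omega> G1" "good \<Omega> G2" shows "good \<Omega> (\<lambda>K. G1 K * G2 K)"
  unfolding good_def
proof
  show "hold \<Omega> (\<lambda>K. G1 K * G2 K)" using assms by (rule hold_mul)
  show "iso \<Omega> (\<lambda>K. G1 K * G2 K)" unfolding iso_def
  proof (intro allI impI)
    fix K assume "subbox K \<Omega>"
    then show "set_of (G1 K * G2 K) \<subseteq> set_of (G1 \<Omega> * G2 \<Omega>)"
      using assms unfolding good_def iso_def by (intro set_of_mul_inc) auto
  qed
qed

lemma good_S:
  assumes S: "ivl_enclosure s S" "ivl_hoelder S" and G: "good \<Omega> G"
  shows "good \<Omega> (\<lambda>K. S (G K))"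
  unfolding good_def
proof
  obtain C g where 1: "0 \<le> C" "0 < g" "g \<le> 1" "\<And>K. subbox K \<Omega> \<Longrightarrow> width (G K) \<le> C * box_width K powr g"
    using G unfolding hold_def good_def by blast
  obtain Cs gs where s: "Cs > 0" "0 < gs" "gs \<le> 1" "\<And>X. width (S X) \<le> Cs * width X powr gs"
    using S(2) unfolding ivl_hoelder_def by blast
  show "hold \<Omega> (\<lambda>K. S (G K))"
  proof (rule holdI'[of "Cs * C powr gs" "g * gs"])
    fix K assume K: "subbox K \<Omega>"
    have ne': "K \<noteq> []" using subbox_len[OF K] ne by auto
    have bw0: "0 \<le> box_width K" by (rule bw_nonneg[OF ne'])
    have "width (S (G K)) \<le> Cs * width (G K) powr gs" by (rule s(4))
    also have "\<dots> \<le> Cs * (C * box_width K powr g) powr gs"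
      using s 1(4)[OF K] by (intro mult_left_mono powr_mono2) (auto simp: width_nonneg)
    also have "\<dots> = (Cs * C powr gs) * box_width K powr (g * gs)"
      using 1 bw0 by (simp add: powr_mult powr_powr)
    finally show "width (S (G K)) \<le> (Cs * C powr gs) * box_width K powr (g * gs)" .
  qed (use 1 s in \<open>auto intro: mult_le_one\<close>)
  show "iso \<Omega> (\<lambda>K. S (G K))" using G iso_S[OF S(1)] unfolding good_def iso_def by blast
qed

lemma good_if: "good \<Omega> A \<Longrightarrow> good \<Omega> (\<lambda>K. if c then A K else 0)"
  using good_const[of 0] by (cases c) (simp_all add: interval_of_0)

lemma good_ipowr:
  assumes G: "good \<Omega> G" and p: "1 \<le> p"
  shows "good \<Omega> (\<lambda>K. ipowr (abs_interval (G K)) p)"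
  unfolding good_def
proof
  obtain C g where 1: "0 \<le> C" "0 < g" "g \<le> 1" "\<And>K. subbox K \<Omega> \<Longrightarrow> width (G K) \<le> C * box_width K powr g"
    using G unfolding hold_def good_def by blast
  define M where "M = mag (G \<Omega>)"
  show "hold \<Omega> (\<lambda>K. ipowr (abs_interval (G K)) p)"
  proof (rule holdI'[of "p * M powr (p - 1) * C" g])
    fix K assume K: "subbox K \<Omega>"
    have m: "mag (G K) \<le> M" using G K unfolding good_def iso_def M_def by (simp add: mag_mono)
    have "width (ipowr (abs_interval (G K)) p) \<le> p * M powr (p - 1) * width (abs_interval (G K))"
      by (rule width_ipowr_abs[OF p]) (use m in \<open>simp add: mag_def\<close>)
    also have "\<dots> \<le> p * M powr (p - 1) * width (G K)"
      using p by (intro mult_left_mono width_abs_interval) auto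
    also have "\<dots> \<le> p * M powr (p - 1) * (C * box_width K powr g)"
      using p 1(4)[OF K] by (intro mult_left_mono) auto
    finally show "width (ipowr (abs_interval (G K)) p) \<le> p * M powr (p - 1) * C * box_width K powr g"
      by (simp add: mult.assoc)
  qed (use 1 p in auto)
  show "iso \<Omega> (\<lambda>K. ipowr (abs_interval (G K)) p)" unfolding iso_def
    using G p ipowr_abs_mono unfolding good_def iso_def by auto
qed

lemma good_ival:
  assumes S: "ivl_enclosure s S" "ivl_hoelder S" and len: "length \<Omega> = d 0"
  shows "0 < k \<or> j < d 0 \<Longrightarrow> good \<Omega> (\<lambda>K. ival_x k d W b S K j)"
proof (induction k arbitrary: j)
  case 0
  then show ?case using good_side len by simp
next
  case (Suc k)
  have "good \<Omega> (\<lambda>K. Fval (Suc k) d W b S K j)"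
    unfolding Fval.simps
    by (intro good_add good_sum good_mul good_const Suc.IH) (auto intro!: idx_aux)
  then show ?case unfolding ival_x_Suc' by (rule good_S[OF S])
qed

lemma good_Fval:
  assumes S: "ivl_enclosure s S" "ivl_hoelder S" and len: "length \<Omega> = d 0"
  shows "good \<Omega> (\<lambda>K. Fval (Suc k) d W b S K i)"
  unfolding Fval.simps
  by (intro good_add good_sum good_mul good_const good_ival[where d=d, OF S len]) (auto intro!: idx_aux)

lemma good_jac:
  assumes S: "ivl_enclosure s S" "ivl_hoelder S" and S': "ivl_enclosure s' S'" "ivl_hoelder S'"
    and len: "length \<Omega> = d 0"
  shows "good \<Omega> (\<lambda>K. jac_rec n L d W b S S' K i j)"
proof (induction n arbitrary: i j)
  case 0
  then show ?case unfolding jac_rec.simps ipoint_mat_def by (rule good_const)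
next
  case (Suc n)
  show ?case
    unfolding jac_rec.simps Let_def imatmul_def idiag_def ipoint_mat_def
    by (intro good_sum good_mul good_const good_if Suc.IH good_S[OF S'] good_Fval[where d=d, OF S len])
qed

lemma good_F:
  assumes S: "ivl_enclosure s S" "ivl_hoelder S" and S': "ivl_enclosure s' S'" "ivl_hoelder S'"
    and len: "length \<Omega> = d 0" and p: "1 \<le> p"
  shows "good \<Omega> (F_W1p L d W b S S' p)"
proof -
  have "good \<Omega> (\<lambda>K. F_W1p L d W b S S' p K)"
    unfolding F_W1p_def Jac_def
    by (intro good_sum good_add good_ipowr p good_Fval[where d=d, OF S len] good_jac[where d=d, OF S S' len])
  then show ?thesis by simp
qed

lemma F_box_hoelder:
  assumes S: "ivl_enclosure s S" "ivl_hoelder S" and S': "ivl_enclosure s' S'" "ivl_hoelder S'"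
    and len: "length \<Omega> = d 0" and p: "1 \<le> p"
  shows "\<exists>C \<gamma>. box_hoelder \<Omega> (F_W1p L d W b S S' p) C \<gamma>"
proof -
  obtain C g where 1: "0 \<le> C" "0 < g" "g \<le> 1"
      "\<And>K. subbox K \<Omega> \<Longrightarrow> width (F_W1p L d W b S S' p K) \<le> C * box_width K powr g"
    using good_F[where d=d, OF S S' len p] unfolding good_def hold_def by blast
  have "box_hoelder \<Omega> (F_W1p L d W b S S' p) (C + 1) g"
    unfolding box_hoelder_def
  proof (intro conjI allI impI)
    fix K assume K: "subbox K \<Omega>"
    have "C * box_width K powr g \<le> (C + 1) * box_width K powr g"
      by (intro mult_right_mono) auto
    then show "width (F_W1p L d W b S S' p K) \<le> (C + 1) * box_width K powr g" using 1(4)[OF K] by linarith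
  qed (use 1 in auto)
  then show ?thesis by blast
qed

end


definition hop :: "ivl \<Rightarrow> real set" where "hop Y = {lower Y ..< upper Y}"

definition hbox :: "box \<Rightarrow> (nat \<Rightarrow> real) set" where
  "hbox K = PiE {..<length K} (\<lambda>j. hop (K ! j))"

definition piece :: "ivl \<Rightarrow> nat \<Rightarrow> nat \<Rightarrow> ivl" where
  "piece X m k = Ivl (lower X + real k * width X / real m) (lower X + real (Suc k) * width X / real m)"

lemma split_uniform_piece: "set (split_uniform X m) = piece X m ` {..<m}"
  unfolding split_uniform_def piece_def by auto

context
  fixes X :: ivl and m :: nat
  assumes pos: "lower X < upper X" and m: "1 \<le> m"
begin

lemma piece_bounds:
  "lower (piece X m k) = lower X + real k * width X / real m"
  "upper (piece X m k) = lower X + real (Suc k) * width X / real m"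
proof -
  have "real k * width X / real m \<le> real (Suc k) * width X / real m"
    using pos m unfolding width_def by (intro divide_right_mono mult_right_mono) auto
  then show "lower (piece X m k) = lower X + real k * width X / real m"
    "upper (piece X m k) = lower X + real (Suc k) * width X / real m"
    unfolding piece_def by (simp_all add: Ivl.rep_eq lower.rep_eq upper.rep_eq)
qed

lemma piece_bounds':
  "lower (piece X m k) = lower X + real k * (width X / real m)"
  "upper (piece X m k) = lower X + (real k + 1) * (width X / real m)"
  using m unfolding piece_bounds by (simp_all add: field_simps)

lemma piece_width: "width (piece X m k) = width X / real m"
  using m unfolding width_def[of "piece X m k"] piece_bounds' by (simp add: field_simps)

lemma piece_pos: "lower (piece X m k) < upper (piece X m k)"
  using pos m unfolding piece_bounds width_def by (simp add: field_simps)

lemma piece_sub: "k < m \<Longrightarrow> set_of (piece X m k) \<subseteq> set_of X"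
proof -
  assume k: "k < m"
  have "real (Suc k) * width X / real m \<le> real m * width X / real m"
    using k pos m unfolding width_def by (intro divide_right_mono mult_right_mono) auto
  then have "real (Suc k) * width X / real m \<le> width X" using m by simp
  moreover have "0 \<le> real k * width X / real m" using pos unfolding width_def by simp
  ultimately show ?thesis unfolding set_of_eq piece_bounds width_def by auto
qed

lemma piece_disj:
  assumes "k1 \<noteq> k2" shows "hop (piece X m k1) \<inter> hop (piece X m k2) = {}"
proof -
  have h: "0 < width X / real m" using pos m unfolding width_def by simp
  have *: "upper (piece X m k1) \<le> lower (piece X m k2)" if "k1 < k2" for k1 k2
  proof -
    have "real (Suc k1) * (width X / real m) \<le> real k2 * (width X / real m)"
      using that h by (intro mult_right_mono) auto
    then show ?thesis unfolding piece_bounds by (simp add: field_simps)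
  qed
  show ?thesis using assms *[of k1 k2] *[of k2 k1] unfolding hop_def
    by (cases "k1 < k2") auto
qed

lemma piece_cover:
  assumes x: "x \<in> hop X" shows "\<exists>k<m. x \<in> hop (piece X m k)"
proof -
  define h where "h = width X / real m"
  have h: "0 < h" using pos m unfolding width_def h_def by simp
  define k where "k = nat \<lfloor>(x - lower X) / h\<rfloor>"
  have x0: "0 \<le> (x - lower X) / h" using x h unfolding hop_def by auto
  have "(x - lower X) / h < real m"
    using x h m unfolding hop_def h_def width_def by (simp add: field_simps)
  have kf: "real k = of_int \<lfloor>(x - lower X) / h\<rfloor>" unfolding k_def using x0 by simp
  have k1: "real k \<le> (x - lower X) / h" "(x - lower X) / h < real k + 1"
    unfolding kf by linarith+
  have "k < m" using k1 \<open>(x - lower X) / h < real m\<close> by linarith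
  moreover have "x \<in> hop (piece X m k)"
  proof -
    have "real k * h \<le> x - lower X" using k1(1) h by (simp add: pos_le_divide_eq)
    moreover have "x - lower X < (real k + 1) * h" using k1(2) h by (simp add: pos_divide_less_eq)
    ultimately show ?thesis unfolding hop_def piece_bounds' h_def[symmetric] by (auto simp: algebra_simps)
  qed
  ultimately show ?thesis by blast
qed

lemma piece_hop_sub: "k < m \<Longrightarrow> hop (piece X m k) \<subseteq> hop X"
  using piece_sub[of k] piece_pos[of k] unfolding hop_def set_of_eq by auto

end

definition nondeg :: "box \<Rightarrow> bool" where
  "nondeg K \<longleftrightarrow> (\<forall>j<length K. lower (K ! j) < upper (K ! j))"

lemma subbox_trans: "subbox A B \<Longrightarrow> subbox B C \<Longrightarrow> subbox A C"
  unfolding subbox_def by (metis order_trans)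

lemma child_char:
  "c \<in> set (product_lists (map (\<lambda>X. split_uniform X (f X)) K)) \<longleftrightarrow>
   length c = length K \<and> (\<forall>j<length K. \<exists>k<f (K ! j). c ! j = piece (K ! j) (f (K ! j)) k)"
  unfolding product_lists_set list_all2_conv_all_nth by (auto simp: split_uniform_piece image_iff Bex_def)

context
  fixes K :: box and f :: "ivl \<Rightarrow> nat"
  assumes nd: "nondeg K" and f1: "\<And>j. j < length K \<Longrightarrow> 1 \<le> f (K ! j)"
begin

abbreviation "Ch \<equiv> set (product_lists (map (\<lambda>X. split_uniform X (f X)) K))"

lemma ch_finite: "finite Ch" by simp

lemma ch_sub: "c \<in> Ch \<Longrightarrow> subbox c K \<and> nondeg c"
proof -
  assume c: "c \<in> Ch"
  then have len: "length c = length K" and pc: "\<And>j. j < length K \<Longrightarrow> \<exists>k<f (K ! j). c ! j = piece (K ! j) (f (K ! j)) k"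
    unfolding child_char by auto
  have "set_of (c ! j) \<subseteq> set_of (K ! j) \<and> lower (c ! j) < upper (c ! j)" if j: "j < length K" for j
  proof -
    obtain k where k: "k < f (K ! j)" "c ! j = piece (K ! j) (f (K ! j)) k" using pc[OF j] by blast
    have pos: "lower (K ! j) < upper (K ! j)" using nd j unfolding nondeg_def by auto
    show ?thesis using piece_sub[OF pos f1[OF j] k(1)] piece_pos[OF pos f1[OF j]] k(2) by simp
  qed
  then show ?thesis unfolding subbox_def nondeg_def using len by simp
qed

lemma ch_width: "c \<in> Ch \<Longrightarrow> j < length K \<Longrightarrow> width (c ! j) = width (K ! j) / real (f (K ! j))"
proof -
  assume c: "c \<in> Ch" and j: "j < length K"
  obtain k where k: "k < f (K ! j)" "c ! j = piece (K ! j) (f (K ! j)) k" using c j unfolding child_char by blast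
  have pos: "lower (K ! j) < upper (K ! j)" using nd j unfolding nondeg_def by auto
  show ?thesis using piece_width[OF pos f1[OF j]] k by simp
qed

lemma ch_disj: "c1 \<in> Ch \<Longrightarrow> c2 \<in> Ch \<Longrightarrow> c1 \<noteq> c2 \<Longrightarrow> hbox c1 \<inter> hbox c2 = {}"
proof -
  assume c1: "c1 \<in> Ch" and c2: "c2 \<in> Ch" and ne: "c1 \<noteq> c2"
  have len: "length c1 = length K" "length c2 = length K" using c1 c2 unfolding child_char by auto
  obtain j where j: "j < length K" "c1 ! j \<noteq> c2 ! j" using ne len nth_equalityI by metis
  obtain k1 where k1: "k1 < f (K ! j)" "c1 ! j = piece (K ! j) (f (K ! j)) k1" using c1 j unfolding child_char by blast
  obtain k2 where k2: "k2 < f (K ! j)" "c2 ! j = piece (K ! j) (f (K ! j)) k2" using c2 j unfolding child_char by blast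
  have pos: "lower (K ! j) < upper (K ! j)" using nd j(1) unfolding nondeg_def by auto
  have "k1 \<noteq> k2" using j k1 k2 by auto
  then have "hop (c1 ! j) \<inter> hop (c2 ! j) = {}" using piece_disj[OF pos f1[OF j(1)]] k1 k2 by simp
  then show ?thesis unfolding hbox_def using len j by (auto simp: PiE_iff)
qed

lemma ch_union: "\<Union> (hbox ` Ch) = hbox K"
proof
  show "\<Union> (hbox ` Ch) \<subseteq> hbox K"
  proof safe
    fix c x assume c: "c \<in> Ch" and x: "x \<in> hbox c"
    have len: "length c = length K" using c unfolding child_char by auto
    have "hop (c ! j) \<subseteq> hop (K ! j)" if j: "j < length K" for j
    proof -
      obtain k where k: "k < f (K ! j)" "c ! j = piece (K ! j) (f (K ! j)) k" using c j unfolding child_char by blast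
      have pos: "lower (K ! j) < upper (K ! j)" using nd j unfolding nondeg_def by auto
      show ?thesis using piece_hop_sub[OF pos f1[OF j] k(1)] k(2) by simp
    qed
    then show "x \<in> hbox K" using x len unfolding hbox_def by (auto simp: PiE_iff)
  qed
  show "hbox K \<subseteq> \<Union> (hbox ` Ch)"
  proof
    fix x assume x: "x \<in> hbox K"
    have "\<forall>j. \<exists>k. j < length K \<longrightarrow> k < f (K ! j) \<and> x j \<in> hop (piece (K ! j) (f (K ! j)) k)"
    proof
      fix j show "\<exists>k. j < length K \<longrightarrow> k < f (K ! j) \<and> x j \<in> hop (piece (K ! j) (f (K ! j)) k)"
      proof (cases "j < length K")
        case True
        have pos: "lower (K ! j) < upper (K ! j)" using nd True unfolding nondeg_def by auto
        have "x j \<in> hop (K ! j)" using x True unfolding hbox_def by auto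
        then show ?thesis using piece_cover[OF pos f1[OF True]] by blast
      qed simp
    qed
    then obtain kk where kk: "\<And>j. j < length K \<Longrightarrow> kk j < f (K ! j) \<and> x j \<in> hop (piece (K ! j) (f (K ! j)) (kk j))"
      by metis
    define c where "c = map (\<lambda>j. piece (K ! j) (f (K ! j)) (kk j)) [0..<length K]"
    have "c \<in> Ch" unfolding child_char c_def using kk by auto
    moreover have "x \<in> hbox c" using x kk unfolding hbox_def c_def by (auto simp: PiE_iff)
    ultimately show "x \<in> \<Union> (hbox ` Ch)" by blast
  qed
qed

end


abbreviation MM :: "nat \<Rightarrow> (nat \<Rightarrow> real) measure" where "MM n \<equiv> lebesgue_n n"

interpretation lb: product_sigma_finite "\<lambda>_::nat. lborel :: real measure"
  by (intro product_sigma_finite.intro) (rule sigma_finite_lborel)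

lemma prod_list_map_nth: "prod_list (map f xs) = (\<Prod>j<length xs. f (xs ! j))"
  for f :: "'a \<Rightarrow> real"
  by (induction xs) (simp_all add: prod.lessThan_Suc_shift del: prod.lessThan_Suc)

lemma box_vol_prod: "box_vol K = (\<Prod>j<length K. width (K ! j))"
  unfolding box_vol_def by (rule prod_list_map_nth)

lemma hbox_sets: "length K = n \<Longrightarrow> hbox K \<in> sets (MM n)"
  unfolding hbox_def hop_def by (erule subst) (intro sets_PiM_I_finite, auto)

lemma box_set_sets: "length K = n \<Longrightarrow> box_set K \<in> sets (MM n)"
  unfolding box_set_def set_of_eq by (erule subst) (intro sets_PiM_I_finite, auto)

lemma emeasure_hbox: "length K = n \<Longrightarrow> emeasure (MM n) (hbox K) = ennreal (box_vol K)"
proof -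
  assume len: "length K = n"
  have "emeasure (MM n) (hbox K) = (\<Prod>j<n. emeasure lborel (hop (K ! j)))"
    unfolding hbox_def len by (rule lb.emeasure_PiM) (auto simp: hop_def)
  also have "\<dots> = (\<Prod>j<n. ennreal (width (K ! j)))"
    unfolding hop_def width_def by (intro prod.cong refl emeasure_lborel_Ico) simp
  also have "\<dots> = ennreal (box_vol K)"
    unfolding box_vol_prod len by (rule prod_ennreal) (simp add: width_def)
  finally show ?thesis .
qed

lemma emeasure_box_set: "length K = n \<Longrightarrow> emeasure (MM n) (box_set K) = ennreal (box_vol K)"
proof -
  assume len: "length K = n"
  have "emeasure (MM n) (box_set K) = (\<Prod>j<n. emeasure lborel (set_of (K ! j)))"
    unfolding box_set_def len by (rule lb.emeasure_PiM) (auto simp: set_of_eq)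
  also have "\<dots> = (\<Prod>j<n. ennreal (width (K ! j)))"
    unfolding set_of_eq width_def by (intro prod.cong refl emeasure_lborel_Icc) simp
  also have "\<dots> = ennreal (box_vol K)"
    unfolding box_vol_prod len by (rule prod_ennreal) (simp add: width_def)
  finally show ?thesis .
qed

lemma box_vol_nonneg: "0 \<le> box_vol K"
  unfolding box_vol_prod by (intro prod_nonneg) (simp add: width_def)

lemma measure_hbox: "length K = n \<Longrightarrow> measure (MM n) (hbox K) = box_vol K"
  using emeasure_hbox[of K n] box_vol_nonneg[of K] by (simp add: measure_def)

lemma hbox_sub: "hbox K \<subseteq> box_set K"
  unfolding hbox_def box_set_def hop_def set_of_eq by (intro PiE_mono) auto

lemma measurable_cont:
  fixes g :: "(nat \<Rightarrow> real) \<Rightarrow> real"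
  assumes "continuous_on UNIV g"
  shows "g \<in> borel_measurable (MM n)"
proof -
  have id: "(\<lambda>x. x) \<in> borel_measurable (MM n)"
  proof (rule measurable_coordinatewise_then_product)
    fix i :: nat
    show "(\<lambda>x. x i) \<in> borel_measurable (MM n)"
    proof (cases "i < n")
      case True
      then have "(\<lambda>x. x i) \<in> MM n \<rightarrow>\<^sub>M lborel" by (intro measurable_component_singleton) auto
      then show ?thesis by simp
    next
      case False
      have "(\<lambda>x. x i) \<in> borel_measurable (MM n) \<longleftrightarrow> (\<lambda>x. undefined :: real) \<in> borel_measurable (MM n)"
        by (rule measurable_cong) (use False in \<open>auto simp: space_PiM PiE_iff extensional_def\<close>)
      then show ?thesis by simp
    qed
  qed
  show ?thesis using measurable_compose[OF id borel_measurable_continuous_onI[OF assms]] by simp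
qed

lemma set_integrable_bounded:
  fixes g :: "(nat \<Rightarrow> real) \<Rightarrow> real"
  assumes g: "continuous_on UNIV g" and A: "A \<in> sets (MM n)" and fin: "emeasure (MM n) A < \<infinity>"
    and bd: "\<And>x. x \<in> A \<Longrightarrow> \<bar>g x\<bar> \<le> B"
  shows "set_integrable (MM n) A g"
proof (rule set_integrable_bound)
  show "set_integrable (MM n) A (\<lambda>_. B)"
    unfolding set_integrable_def using A fin
    by (intro integrable_scaleR_left integrable_real_indicator) auto
  show "set_borel_measurable (MM n) A g"
    unfolding set_borel_measurable_def using measurable_cont[OF g] A
    by (intro borel_measurable_indicator' borel_measurable_scaleR) (auto intro: measurable_ident_sets)
  show "AE x\<in>A in MM n. norm (g x) \<le> norm B"
  proof (intro AE_I2 impI)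
    fix x assume "x \<in> A" then show "norm (g x) \<le> norm B" using bd[of x] by simp
  qed
qed

lemma int_hbox_bounds:
  fixes g :: "(nat \<Rightarrow> real) \<Rightarrow> real"
  assumes g: "continuous_on UNIV g" and len: "length K = n"
    and bd: "\<And>x. x \<in> hbox K \<Longrightarrow> lo \<le> g x \<and> g x \<le> hi"
  shows "lo * box_vol K \<le> set_lebesgue_integral (MM n) (hbox K) g"
    "set_lebesgue_integral (MM n) (hbox K) g \<le> hi * box_vol K"
proof -
  have A: "hbox K \<in> sets (MM n)" by (rule hbox_sets[OF len])
  have fin: "emeasure (MM n) (hbox K) < \<infinity>" using emeasure_hbox[OF len] by simp
  have gi: "set_integrable (MM n) (hbox K) g"
    by (rule set_integrable_bounded[OF g A fin, of "max \<bar>lo\<bar> \<bar>hi\<bar>"]) (use bd in force)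
  have ci: "set_integrable (MM n) (hbox K) (\<lambda>_. c)" for c :: real
    unfolding set_integrable_def using A fin
    by (intro integrable_scaleR_left integrable_real_indicator) auto
  have cint: "set_lebesgue_integral (MM n) (hbox K) (\<lambda>_. c) = c * box_vol K" for c :: real
    using set_integral_const[OF A, of c] fin measure_hbox[OF len] by (simp add: mult.commute)
  show "lo * box_vol K \<le> set_lebesgue_integral (MM n) (hbox K) g"
    using set_integral_mono[OF ci gi, of lo] bd cint by simp
  show "set_lebesgue_integral (MM n) (hbox K) g \<le> hi * box_vol K"
    using set_integral_mono[OF gi ci, of hi] bd cint by simp
qed

lemma int_partition:
  fixes g :: "(nat \<Rightarrow> real) \<Rightarrow> real"
  assumes g: "continuous_on UNIV g" and fin: "finite P"
    and len: "\<And>K. K \<in> P \<Longrightarrow> length K = n"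
    and disj: "\<And>K K'. K \<in> P \<Longrightarrow> K' \<in> P \<Longrightarrow> K \<noteq> K' \<Longrightarrow> hbox K \<inter> hbox K' = {}"
    and bd: "\<And>K x. K \<in> P \<Longrightarrow> x \<in> hbox K \<Longrightarrow> \<bar>g x\<bar> \<le> B"
  shows "set_lebesgue_integral (MM n) (\<Union> (hbox ` P)) g = (\<Sum>K\<in>P. set_lebesgue_integral (MM n) (hbox K) g)"
proof (rule set_integral_finite_UN_AE[OF fin])
  fix K K' assume "K \<in> P" "K' \<in> P"
  then show "AE x in MM n. x \<in> hbox K \<and> x \<in> hbox K' \<longrightarrow> K = K'"
    using disj by (intro AE_I2) blast
next
  fix K assume K: "K \<in> P"
  show "hbox K \<in> sets (MM n)" by (rule hbox_sets[OF len[OF K]])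
  show "set_integrable (MM n) (hbox K) g"
    using emeasure_hbox[OF len[OF K]] bd[OF K]
    by (intro set_integrable_bounded[OF g hbox_sets[OF len[OF K]]]) auto
qed

lemma int_null_diff:
  fixes g :: "(nat \<Rightarrow> real) \<Rightarrow> real"
  assumes g: "continuous_on UNIV g" and len: "length K = n"
    and bd: "\<And>x. x \<in> box_set K \<Longrightarrow> \<bar>g x\<bar> \<le> B"
  shows "set_lebesgue_integral (MM n) (box_set K) g = set_lebesgue_integral (MM n) (hbox K) g"
proof -
  define D where "D = box_set K - hbox K"
  have A: "box_set K \<in> sets (MM n)" "hbox K \<in> sets (MM n)" using box_set_sets[OF len] hbox_sets[OF len] by auto
  have Ds: "D \<in> sets (MM n)" unfolding D_def using A by auto
  have "emeasure (MM n) D = emeasure (MM n) (box_set K) - emeasure (MM n) (hbox K)"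
    unfolding D_def by (rule emeasure_Diff) (use A emeasure_hbox[OF len] hbox_sub in auto)
  then have D0: "emeasure (MM n) D = 0" using emeasure_hbox[OF len] emeasure_box_set[OF len] by simp
  then have Dn: "D \<in> null_sets (MM n)" using Ds by auto
  have finb: "emeasure (MM n) (box_set K) < \<infinity>" using emeasure_box_set[OF len] by simp
  have gi: "set_integrable (MM n) (box_set K) g"
    by (rule set_integrable_bounded[OF g A(1) finb bd])
  have giD: "set_integrable (MM n) D g" by (rule set_integrable_subset[OF gi Ds]) (auto simp: D_def)
  have giH: "set_integrable (MM n) (hbox K) g" by (rule set_integrable_subset[OF gi A(2) hbox_sub])
  have "set_lebesgue_integral (MM n) D g = integral\<^sup>L (MM n) (\<lambda>x. 0)"
    unfolding set_lebesgue_integral_def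
  proof (rule integral_cong_AE)
    show "(\<lambda>x. indicat_real D x *\<^sub>R g x) \<in> borel_measurable (MM n)"
      using giD unfolding set_integrable_def by (rule borel_measurable_integrable)
    show "AE x in MM n. indicat_real D x *\<^sub>R g x = 0"
      using AE_not_in[OF Dn] by eventually_elim simp
  qed simp
  then have z: "set_lebesgue_integral (MM n) D g = 0" by simp
  have "box_set K = hbox K \<union> D" unfolding D_def using hbox_sub by auto
  then have "set_lebesgue_integral (MM n) (box_set K) g = set_lebesgue_integral (MM n) (hbox K) g + set_lebesgue_integral (MM n) D g"
    using set_integral_Un[OF _ giH giD] by (simp add: D_def Int_Diff)
  then show ?thesis using z by simp
qed


lemma doerfler_prop:
  fixes eta :: "box \<Rightarrow> real"
  assumes fin: "finite P" and nn: "\<And>K. K \<in> P \<Longrightarrow> 0 \<le> eta K" and th: "th \<le> 1"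
  shows "doerfler th eta P \<subseteq> P \<and> th * sum eta P \<le> sum eta (doerfler th eta P)"
proof -
  define M where "M k = (doerfler_step th eta P ^^ k) {}" for k
  have sP: "0 \<le> sum eta P" using nn by (simp add: sum_nonneg)
  have full: "th * sum eta P \<le> sum eta P" using mult_right_mono[OF th sP] by simp
  have inv: "M k \<subseteq> P \<and> (th * sum eta P \<le> sum eta (M k) \<or> k \<le> card (M k))" for k
  proof (induction k)
    case 0
    then show ?case by (simp add: M_def)
  next
    case (Suc k)
    have Ms: "M (Suc k) = doerfler_step th eta P (M k)" by (simp add: M_def)
    show ?case
    proof (cases "th * sum eta P \<le> sum eta (M k)")
      case True
      then show ?thesis using Suc.IH Ms by (simp add: doerfler_step_def)
    next
      case False
      then have le: "k \<le> card (M k)" and sub: "M k \<subseteq> P" using Suc.IH by auto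
      have ne: "P - M k \<noteq> {}"
      proof
        assume "P - M k = {}"
        then have "M k = P" using sub by auto
        then show False using False full by simp
      qed
      have finD: "finite (P - M k)" using fin by simp
      obtain K0 where K0: "K0 \<in> P - M k" "eta K0 = Max (eta ` (P - M k))"
      proof -
        have "Max (eta ` (P - M k)) \<in> eta ` (P - M k)" by (rule Max_in) (use finD ne in auto)
        then show ?thesis using that by (metis (no_types, lifting) imageE)
      qed
      have Mn: "M (Suc k) = M k \<union> {K \<in> P - M k. eta K = Max (eta ` (P - M k))}"
        using Ms False by (simp add: doerfler_step_def)
      have sub': "M (Suc k) \<subseteq> P" using Mn sub by auto
      have "M k \<subset> M (Suc k)" using Mn K0 by auto
      then have "card (M k) < card (M (Suc k))"
        using sub' fin by (intro psubset_card_mono) (auto intro: finite_subset)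
      then show ?thesis using sub' le by simp
    qed
  qed
  have D: "doerfler th eta P = M (card P)" unfolding doerfler_def M_def by simp
  have sub: "M (card P) \<subseteq> P" using inv by simp
  have "th * sum eta P \<le> sum eta (M (card P))"
  proof (cases "th * sum eta P \<le> sum eta (M (card P))")
    case False
    then have "card P \<le> card (M (card P))" using inv by auto
    then have "M (card P) = P" using sub fin by (meson card_seteq)
    then show ?thesis using full by simp
  qed simp
  then show ?thesis using D sub by simp
qed

lemma sum_Un_le_nonneg:
  fixes f :: "'a \<Rightarrow> real"
  assumes "finite A" "finite B" "\<And>x. x \<in> A \<union> B \<Longrightarrow> 0 \<le> f x"
  shows "sum f (A \<union> B) \<le> sum f A + sum f B"
proof -
  have "sum f (A \<union> B) = sum f A + sum f B - sum f (A \<inter> B)" using assms(1,2) by (simp add: sum_Un)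
  moreover have "0 \<le> sum f (A \<inter> B)" using assms by (intro sum_nonneg) auto
  ultimately show ?thesis by simp
qed

lemma sum_UN_le_nonneg:
  fixes f :: "'a \<Rightarrow> real"
  assumes "finite I" "\<And>i. i \<in> I \<Longrightarrow> finite (R i)" "\<And>x. x \<in> \<Union> (R ` I) \<Longrightarrow> 0 \<le> f x"
  shows "sum f (\<Union> (R ` I)) \<le> (\<Sum>i\<in>I. sum f (R i))"
  using assms
proof (induction I rule: finite_induct)
  case empty
  then show ?case by simp
next
  case (insert i I)
  have "sum f (\<Union> (R ` insert i I)) = sum f (R i \<union> \<Union> (R ` I))" by simp
  also have "\<dots> \<le> sum f (R i) + sum f (\<Union> (R ` I))"
    using insert by (intro sum_Un_le_nonneg) auto
  also have "\<dots> \<le> sum f (R i) + (\<Sum>i\<in>I. sum f (R i))"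
    using insert by (intro add_left_mono insert.IH) auto
  finally show ?case using insert by simp
qed

lemma eta_nonneg: "0 \<le> indicator_eta F K"
  unfolding indicator_eta_def using box_vol_nonneg[of K] by (simp add: width_def)


lemma nondeg_vol_pos: "nondeg K \<Longrightarrow> 0 < box_vol K"
  unfolding box_vol_prod nondeg_def by (intro prod_pos) (auto simp: width_def)

lemma sum_vol_children:
  assumes fin: "finite R" and len: "\<And>c. c \<in> R \<Longrightarrow> length c = length K"
    and disj: "\<And>c c'. c \<in> R \<Longrightarrow> c' \<in> R \<Longrightarrow> c \<noteq> c' \<Longrightarrow> hbox c \<inter> hbox c' = {}"
    and un: "\<Union> (hbox ` R) = hbox K"
  shows "(\<Sum>c\<in>R. box_vol c) = box_vol K"
proof -
  have "(\<Sum>c\<in>R. emeasure (MM (length K)) (hbox c)) = emeasure (MM (length K)) (\<Union> (hbox ` R))"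
  proof (rule sum_emeasure)
    show "hbox ` R \<subseteq> sets (MM (length K))"
    proof
      fix A assume "A \<in> hbox ` R"
      then obtain c where "c \<in> R" "A = hbox c" by blast
      then show "A \<in> sets (MM (length K))" using hbox_sets[OF len] by simp
    qed
    show "disjoint_family_on hbox R" unfolding disjoint_family_on_def using disj by auto
  qed (rule fin)
  then have "(\<Sum>c\<in>R. ennreal (box_vol c)) = ennreal (box_vol K)"
    unfolding un using emeasure_hbox len by simp
  then have "ennreal (\<Sum>c\<in>R. box_vol c) = ennreal (box_vol K)"
    by (subst (asm) sum_ennreal) (auto simp: box_vol_nonneg)
  then show ?thesis by (simp add: box_vol_nonneg sum_nonneg)
qed

lemma refine_props:
  assumes hb: "box_hoelder \<Omega> F C g" and rho: "0 < \<rho>"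
    and K: "subbox K \<Omega>" "nondeg K" "K \<noteq> []"
  defines "R \<equiv> hoelder_refine C g \<rho> F K"
  shows "finite R \<and> (\<forall>c\<in>R. subbox c K \<and> nondeg c) \<and>
    (\<forall>c\<in>R. \<forall>c'\<in>R. c \<noteq> c' \<longrightarrow> hbox c \<inter> hbox c' = {}) \<and> \<Union> (hbox ` R) = hbox K \<and>
    sum (indicator_eta F) R \<le> \<rho> * indicator_eta F K"
proof (cases "indicator_eta F K = 0")
  case True
  then have "R = {K}" unfolding R_def hoelder_refine_def by simp
  then show ?thesis using True K by (simp add: subbox_def)
next
  case False
  define eta where "eta = indicator_eta F K"
  have vK: "0 < box_vol K" using nondeg_vol_pos[OF K(2)] .
  have eta: "0 < eta" using False eta_nonneg[of F K] unfolding eta_def by simp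
  obtain Cp: "0 < C" "0 < g" "g \<le> 1" "\<And>K. subbox K \<Omega> \<Longrightarrow> width (F K) \<le> C * box_width K powr g"
    using hb unfolding box_hoelder_def by blast
  define T where "T = (C * box_vol K / (\<rho> * eta)) powr (1 / g)"
  have Tp: "0 < T" unfolding T_def using Cp vK eta rho by simp
  define f where "f X = nat \<lceil>width X * T\<rceil>" for X
  have R: "R = set (product_lists (map (\<lambda>X. split_uniform X (f X)) K))"
    unfolding R_def hoelder_refine_def f_def T_def eta_def using False by (simp add: Let_def)
  have wpos: "0 < width (K ! j)" if "j < length K" for j
    using K(2) that unfolding nondeg_def width_def by auto
  have f1: "1 \<le> f (K ! j)" if "j < length K" for j
  proof -
    have "0 < width (K ! j) * T" using wpos[OF that] Tp by simp
    then have "1 \<le> \<lceil>width (K ! j) * T\<rceil>" by (simp add: one_le_ceiling)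
    then show ?thesis unfolding f_def by linarith
  qed
  have finR: "finite R" unfolding R by simp
  have subR: "\<forall>c\<in>R. subbox c K \<and> nondeg c" unfolding R using ch_sub[where f=f, OF K(2) f1] by blast
  have disjR: "\<forall>c\<in>R. \<forall>c'\<in>R. c \<noteq> c' \<longrightarrow> hbox c \<inter> hbox c' = {}" unfolding R using ch_disj[where f=f, OF K(2) f1] by blast
  have unR: "\<Union> (hbox ` R) = hbox K" unfolding R using ch_union[where f=f, OF K(2) f1] by blast
  have lenR: "length c = length K" if "c \<in> R" for c using subR that subbox_len by blast
  have sv: "(\<Sum>c\<in>R. box_vol c) = box_vol K"
    by (rule sum_vol_children[OF finR lenR]) (use disjR unR in auto)
  have ceta: "indicator_eta F c \<le> \<rho> * eta / box_vol K * box_vol c" if c: "c \<in> R" for c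
  proof -
    have cK: "subbox c K" and cne: "c \<noteq> []" using subR c lenR[OF c] K(3) by auto
    have cO: "subbox c \<Omega>" using subbox_trans[OF cK K(1)] .
    have sw: "width (c ! j) \<le> 1 / T" if j: "j < length c" for j
    proof -
      have jK: "j < length K" using j lenR[OF c] by simp
      have wc: "width (c ! j) = width (K ! j) / real (f (K ! j))"
        using ch_width[where f=f, OF K(2) f1] c jK unfolding R by blast
      have "width (K ! j) * T \<le> real (f (K ! j))" unfolding f_def by linarith
      then have "width (K ! j) / real (f (K ! j)) \<le> width (K ! j) / (width (K ! j) * T)"
        using wpos[OF jK] Tp f1[OF jK] by (intro divide_left_mono) (auto simp: zero_less_mult_iff)
      also have "\<dots> = 1 / T" using wpos[OF jK] by simp
      finally show ?thesis using wc by simp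
    qed
    have bw: "box_width c \<le> 1 / T"
      unfolding box_width_def using sw cne by (intro Max.boundedI) (auto simp: in_set_conv_nth)
    have bw0: "0 \<le> box_width c" by (rule bw_nonneg[OF cne])
    have "width (F c) \<le> C * box_width c powr g" by (rule Cp(4)[OF cO])
    also have "\<dots> \<le> C * (1 / T) powr g" using Cp bw bw0 by (intro mult_left_mono powr_mono2) auto
    also have "(1 / T) powr g = \<rho> * eta / (C * box_vol K)"
    proof -
      have "T powr g = C * box_vol K / (\<rho> * eta)"
        unfolding T_def using Cp vK eta rho by (simp add: powr_powr)
      then show ?thesis using Tp by (simp add: powr_divide)
    qed
    finally have "width (F c) \<le> C * (\<rho> * eta / (C * box_vol K))" .
    then have wF: "width (F c) \<le> \<rho> * eta / box_vol K" using Cp by simp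
    show ?thesis unfolding indicator_eta_def
      using mult_right_mono[OF wF box_vol_nonneg[of c]] by simp
  qed
  have "sum (indicator_eta F) R \<le> (\<Sum>c\<in>R. \<rho> * eta / box_vol K * box_vol c)"
    by (rule sum_mono) (rule ceta)
  also have "\<dots> = \<rho> * eta / box_vol K * (\<Sum>c\<in>R. box_vol c)" by (rule sum_distrib_left[symmetric])
  also have "\<dots> = \<rho> * eta" using vK by (simp add: sv)
  finally show ?thesis using finR subR disjR unR unfolding eta_def by blast
qed


definition Inv :: "box \<Rightarrow> box set \<Rightarrow> bool" where
  "Inv \<Omega> P \<longleftrightarrow> finite P \<and> (\<forall>K\<in>P. subbox K \<Omega> \<and> nondeg K) \<and>
     (\<forall>K\<in>P. \<forall>K'\<in>P. K \<noteq> K' \<longrightarrow> hbox K \<inter> hbox K' = {}) \<and> \<Union> (hbox ` P) = hbox \<Omega>"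

lemma Inv_step:
  assumes hb: "box_hoelder \<Omega> F C g" and rho: "0 < \<rho>" "\<rho> < 1" and th: "0 < \<theta>" "\<theta> \<le> 1"
    and ne: "\<Omega> \<noteq> []" and I: "Inv \<Omega> P"
  defines "M \<equiv> doerfler \<theta> (indicator_eta F) P"
  defines "P' \<equiv> (P - M) \<union> \<Union> (hoelder_refine C g \<rho> F ` M)"
  shows "Inv \<Omega> P' \<and> sum (indicator_eta F) P' \<le> (1 - \<theta> * (1 - \<rho>)) * sum (indicator_eta F) P"
proof -
  have finP: "finite P" and PK: "\<And>K. K \<in> P \<Longrightarrow> subbox K \<Omega> \<and> nondeg K"
    and disjP: "\<And>K K'. K \<in> P \<Longrightarrow> K' \<in> P \<Longrightarrow> K \<noteq> K' \<Longrightarrow> hbox K \<inter> hbox K' = {}"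
    and unP: "\<Union> (hbox ` P) = hbox \<Omega>"
    using I unfolding Inv_def by auto
  have Kne: "K \<noteq> []" if "K \<in> P" for K using PK[OF that] subbox_len ne by fastforce
  have dp: "M \<subseteq> P \<and> \<theta> * sum (indicator_eta F) P \<le> sum (indicator_eta F) M"
    unfolding M_def by (rule doerfler_prop[OF finP eta_nonneg th(2)])
  then have MP: "M \<subseteq> P" and dM: "\<theta> * sum (indicator_eta F) P \<le> sum (indicator_eta F) M" by auto
  define Rf where "Rf = hoelder_refine C g \<rho> F"
  have RP: "finite (Rf K) \<and> (\<forall>c\<in>Rf K. subbox c K \<and> nondeg c) \<and>
    (\<forall>c\<in>Rf K. \<forall>c'\<in>Rf K. c \<noteq> c' \<longrightarrow> hbox c \<inter> hbox c' = {}) \<and> \<Union> (hbox ` Rf K) = hbox K \<and>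
    sum (indicator_eta F) (Rf K) \<le> \<rho> * indicator_eta F K" if "K \<in> P" for K
    unfolding Rf_def using refine_props[OF hb rho(1)] PK[OF that] Kne[OF that] by blast
  have KP: "K \<in> P" if "K \<in> M" for K using MP that by blast
  have RP1: "finite (Rf K)" if "K \<in> M" for K using conjunct1[OF RP[OF KP[OF that]]] .
  have RP2: "subbox c K \<and> nondeg c" if "K \<in> M" "c \<in> Rf K" for K c
    using bspec[OF conjunct1[OF conjunct2[OF RP[OF KP[OF that(1)]]]] that(2)] .
  have RP3: "hbox c \<inter> hbox c' = {}" if "K \<in> M" "c \<in> Rf K" "c' \<in> Rf K" "c \<noteq> c'" for K c c'
    using conjunct1[OF conjunct2[OF conjunct2[OF RP[OF KP[OF that(1)]]]]] that(2-4) by simp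
  have RP4: "\<Union> (hbox ` Rf K) = hbox K" if "K \<in> M" for K
    using conjunct1[OF conjunct2[OF conjunct2[OF conjunct2[OF RP[OF KP[OF that]]]]]] .
  have RP5: "sum (indicator_eta F) (Rf K) \<le> \<rho> * indicator_eta F K" if "K \<in> M" for K
    using conjunct2[OF conjunct2[OF conjunct2[OF conjunct2[OF RP[OF KP[OF that]]]]]] .
  have finM: "finite M" using MP finP by (rule finite_subset)
  have P'def: "P' = (P - M) \<union> \<Union> (Rf ` M)" unfolding P'_def Rf_def ..
  have fin': "finite P'" unfolding P'def using finP finM RP1 by simp
  have el': "subbox K \<Omega> \<and> nondeg K" if KP': "K \<in> P'" for K
  proof -
    consider "K \<in> P - M" | A where "A \<in> M" "K \<in> Rf A" using KP' unfolding P'def by blast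
    then show ?thesis
    proof cases
      case 1 then show ?thesis using PK by simp
    next
      case (2 A)
      then show ?thesis using RP2[OF 2] PK[of A] MP subbox_trans by blast
    qed
  qed
  have disj': "hbox K \<inter> hbox K' = {}" if KK: "K \<in> P'" "K' \<in> P'" "K \<noteq> K'" for K K'
  proof -
    have sub: "hbox c \<subseteq> hbox A" if "A \<in> M" "c \<in> Rf A" for A c
      using RP4[OF that(1)] that(2) by blast
    consider "K \<in> P - M" "K' \<in> P - M" | A where "A \<in> M" "K \<in> Rf A" "K' \<in> P - M"
      | A where "A \<in> M" "K' \<in> Rf A" "K \<in> P - M" | A A' where "A \<in> M" "K \<in> Rf A" "A' \<in> M" "K' \<in> Rf A'"
      using KK(1,2) unfolding P'def by blast
    then show ?thesis
    proof cases
      case 1 then show ?thesis using disjP KK(3) by simp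
    next
      case (2 A)
      then have "A \<noteq> K'" "A \<in> P" "K' \<in> P" using MP by auto
      then have "hbox A \<inter> hbox K' = {}" by (rule disjP[rotated -1]) 
      then show ?thesis using sub[OF 2(1,2)] by blast
    next
      case (3 A)
      then have "K \<noteq> A" "K \<in> P" "A \<in> P" using MP by auto
      then have "hbox K \<inter> hbox A = {}" by (rule disjP[rotated -1])
      then show ?thesis using sub[OF 3(1,2)] by blast
    next
      case (4 A A')
      show ?thesis
      proof (cases "A = A'")
        case True
        then show ?thesis using RP3[of A K K'] 4 KK(3) by simp
      next
        case False
        then have "hbox A \<inter> hbox A' = {}" using 4 MP by (intro disjP) auto
        then show ?thesis using sub[OF 4(1,2)] sub[OF 4(3,4)] by blast
      qed
    qed
  qed
  have un': "\<Union> (hbox ` P') = hbox \<Omega>"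
  proof -
    have "\<Union> (hbox ` P') = \<Union> (hbox ` (P - M)) \<union> (\<Union>A\<in>M. \<Union> (hbox ` Rf A))" unfolding P'def by blast
    also have "(\<Union>A\<in>M. \<Union> (hbox ` Rf A)) = (\<Union>A\<in>M. hbox A)" using RP4 by simp
    also have "\<Union> (hbox ` (P - M)) \<union> (\<Union>A\<in>M. hbox A) = \<Union> (hbox ` P)" using MP by blast
    finally show ?thesis using unP by simp
  qed
  have Inv': "Inv \<Omega> P'" unfolding Inv_def using fin' el' disj' un' by blast
  let ?e = "indicator_eta F"
  have "sum ?e P' \<le> sum ?e (P - M) + sum ?e (\<Union> (Rf ` M))"
    unfolding P'def by (rule sum_Un_le_nonneg) (use finP finM RP1 eta_nonneg in simp_all)
  also have "sum ?e (\<Union> (Rf ` M)) \<le> (\<Sum>A\<in>M. sum ?e (Rf A))"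
    by (rule sum_UN_le_nonneg) (use finM RP1 eta_nonneg in simp_all)
  also have "\<dots> \<le> (\<Sum>A\<in>M. \<rho> * ?e A)" using RP5 by (intro sum_mono) simp
  also have "sum ?e (P - M) + (\<Sum>A\<in>M. \<rho> * ?e A) = sum ?e P - (1 - \<rho>) * sum ?e M"
  proof -
    have sd: "(\<Sum>A\<in>M. \<rho> * ?e A) = \<rho> * sum ?e M" by (simp add: sum_distrib_left)
    have "sum ?e P = sum ?e M + sum ?e (P - M)" using sum.subset_diff[OF MP finP, of ?e] by simp
    then show ?thesis unfolding sd by (simp add: algebra_simps)
  qed
  also have "\<dots> \<le> sum ?e P - (1 - \<rho>) * (\<theta> * sum ?e P)"
    using dM rho by (intro diff_left_mono mult_left_mono) auto
  also have "\<dots> = (1 - \<theta> * (1 - \<rho>)) * sum ?e P" by (simp add: algebra_simps)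
  finally show ?thesis using Inv' by simp
qed

lemma Inv_P:
  assumes hb: "box_hoelder \<Omega> F C g" and rho: "0 < \<rho>" "\<rho> < 1" and th: "0 < \<theta>" "\<theta> \<le> 1"
    and ne: "\<Omega> \<noteq> []" and nd: "nondeg \<Omega>"
  shows "Inv \<Omega> (adaquad_P \<theta> C g \<rho> F \<Omega> n) \<and>
    adaquad_eta \<theta> C g \<rho> F \<Omega> (Suc n) \<le> (1 - \<theta> * (1 - \<rho>)) * adaquad_eta \<theta> C g \<rho> F \<Omega> n"
proof (induction n)
  case 0
  have I0: "Inv \<Omega> {\<Omega>}" unfolding Inv_def using nd by (simp add: subbox_def)
  show ?case using Inv_step[OF hb rho th ne I0] I0 unfolding adaquad_eta_def by (simp add: Let_def)
next
  case (Suc n)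
  then have I: "Inv \<Omega> (adaquad_P \<theta> C g \<rho> F \<Omega> (Suc n))"
    using Inv_step[OF hb rho th ne] by (simp add: Let_def)
  show ?case using Inv_step[OF hb rho th ne I] I unfolding adaquad_eta_def
    by (simp only: adaquad_P.simps(2)[of _ _ _ _ _ _ "Suc n"] Let_def)
qed


lemma quad_bounds:
  fixes f :: "'a \<Rightarrow> real" and lo hi :: real
  assumes "\<And>w x. (w, x) \<in> set xs \<Longrightarrow> 0 < w \<and> lo \<le> f x \<and> f x \<le> hi"
  shows "lo * sum_list (map fst xs) \<le> sum_list (map (\<lambda>(w, x). w * f x) xs) \<and>
         sum_list (map (\<lambda>(w, x). w * f x) xs) \<le> hi * sum_list (map fst xs)"
  using assms
proof (induction xs)
  case Nil
  then show ?case by simp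
next
  case (Cons a xs)
  obtain w x where a: "a = (w, x)" by (cases a)
  have h: "0 < w" "lo \<le> f x" "f x \<le> hi" using Cons.prems[of w x] a by auto
  have "w * lo \<le> w * f x" "w * f x \<le> w * hi" using h by (simp_all add: mult_left_mono)
  have IH: "lo * sum_list (map fst xs) \<le> sum_list (map (\<lambda>(w, x). w * f x) xs) \<and>
         sum_list (map (\<lambda>(w, x). w * f x) xs) \<le> hi * sum_list (map fst xs)"
    by (rule Cons.IH) (rule Cons.prems, simp)
  have e1: "sum_list (map (\<lambda>(w, x). w * f x) (a # xs)) = w * f x + sum_list (map (\<lambda>(w, x). w * f x) xs)"
    by (simp add: a)
  have e2: "sum_list (map fst (a # xs)) = w + sum_list (map fst xs)" by (simp add: a)
  show ?case unfolding e1 e2 using IH \<open>w * lo \<le> w * f x\<close> \<open>w * f x \<le> w * hi\<close>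
    by (simp add: distrib_left mult.commute)
qed

lemma in_box_of_box_set: "x \<in> box_set K \<Longrightarrow> in_box x K"
  unfolding box_set_def in_box_def by (auto simp: PiE_iff)

lemma set_integral_sum':
  fixes g :: "'i \<Rightarrow> (nat \<Rightarrow> real) \<Rightarrow> real"
  assumes "finite I" "\<And>i. i \<in> I \<Longrightarrow> set_integrable M A (g i)"
  shows "set_integrable M A (\<lambda>x. \<Sum>i\<in>I. g i x) \<and>
    set_lebesgue_integral M A (\<lambda>x. \<Sum>i\<in>I. g i x) = (\<Sum>i\<in>I. set_lebesgue_integral M A (g i))"
  using assms
proof (induction I rule: finite_induct)
  case empty
  have "set_integrable M A (\<lambda>x. 0::real)" unfolding set_integrable_def by simp
  then show ?case by (simp add: set_lebesgue_integral_def)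
next
  case (insert i I)
  have gi: "set_integrable M A (g i)" using insert by simp
  have IH: "set_integrable M A (\<lambda>x. \<Sum>i\<in>I. g i x)"
    "set_lebesgue_integral M A (\<lambda>x. \<Sum>i\<in>I. g i x) = (\<Sum>i\<in>I. set_lebesgue_integral M A (g i))"
    using insert by auto
  show ?case using insert set_integral_add[OF gi IH(1)] IH(2) by simp
qed

lemma powr_subadd:
  fixes x y r :: real
  assumes "0 \<le> x" "0 \<le> y" "0 < r" "r \<le> 1"
  shows "(x + y) powr r \<le> x powr r + y powr r"
proof (cases "x + y = 0")
  case True
  then show ?thesis using assms by simp
next
  case False
  define s where "s = x + y"
  have s: "0 < s" using False assms unfolding s_def by simp
  have t: "t \<le> t powr r" if "0 \<le> t" "t \<le> 1" for t :: real
  proof (cases "t = 0")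
    case False
    then show ?thesis using powr_mono'[of r 1 t] that assms by simp
  qed simp
  have "1 = x / s + y / s" using s unfolding s_def by (simp add: add_divide_distrib[symmetric])
  also have "\<dots> \<le> (x / s) powr r + (y / s) powr r"
    using assms s by (intro add_mono t) (auto simp: s_def)
  also have "\<dots> = (x powr r + y powr r) / s powr r" by (simp add: powr_divide add_divide_distrib)
  finally have "s powr r \<le> x powr r + y powr r" using s by (simp add: le_divide_eq)
  then show ?thesis unfolding s_def .
qed

lemma powr_diff_abs:
  fixes a b r :: real
  assumes "0 \<le> a" "0 \<le> b" "0 < r" "r \<le> 1"
  shows "\<bar>a powr r - b powr r\<bar> \<le> \<bar>a - b\<bar> powr r"
proof -
  have main: "\<bar>a powr r - b powr r\<bar> \<le> \<bar>a - b\<bar> powr r" if ab: "b \<le> a" "0 \<le> b" for a b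
  proof -
    have "a powr r = (b + (a - b)) powr r" by simp
    also have "\<dots> \<le> b powr r + (a - b) powr r" using ab assms by (intro powr_subadd) auto
    finally have 1: "a powr r - b powr r \<le> (a - b) powr r" by simp
    have "b powr r \<le> a powr r" using ab assms by (intro powr_mono2) auto
    then show ?thesis using 1 ab by simp
  qed
  show ?thesis
  proof (cases "b \<le> a")
    case True
    then show ?thesis using main assms by simp
  next
    case False
    then show ?thesis using main[of a b] assms by (simp add: abs_minus_commute)
  qed
qed

lemma quad_err:
  assumes I: "Inv \<Omega> P" and enc: "box_enclosure \<Omega> f F" and R: "valid_qrule \<Omega> R"
    and fc: "continuous_on UNIV f" and ne: "\<Omega> \<noteq> []"
  shows "\<bar>set_lebesgue_integral (MM (length \<Omega>)) (box_set \<Omega>) f - (\<Sum>K\<in>P. quad R f K)\<bar>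
      \<le> (\<Sum>K\<in>P. indicator_eta F K)"
proof -
  let ?n = "length \<Omega>"
  have finP: "finite P" and PK: "\<And>K. K \<in> P \<Longrightarrow> subbox K \<Omega> \<and> nondeg K"
    and disjP: "\<And>K K'. K \<in> P \<Longrightarrow> K' \<in> P \<Longrightarrow> K \<noteq> K' \<Longrightarrow> hbox K \<inter> hbox K' = {}"
    and unP: "\<Union> (hbox ` P) = hbox \<Omega>"
    using I unfolding Inv_def by auto
  have encK: "f x \<in> set_of (F K)" if "subbox K \<Omega>" "x \<in> box_set K" for K x
    using enc that in_box_of_box_set unfolding box_enclosure_def by blast
  have isoK: "set_of (F K) \<subseteq> set_of (F \<Omega>)" if "subbox K \<Omega>" for K
    using enc that subbox_refl unfolding box_enclosure_def by blast
  define B where "B = mag (F \<Omega>)"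
  have bdK: "\<bar>f x\<bar> \<le> B" if "subbox K \<Omega>" "x \<in> box_set K" for K x
    unfolding B_def using encK[OF that] isoK[OF that(1)] by (meson mag_ge subsetD)
  have lenK: "length K = ?n" if "K \<in> P" for K using PK[OF that] subbox_len by blast
  have "set_lebesgue_integral (MM ?n) (box_set \<Omega>) f = set_lebesgue_integral (MM ?n) (hbox \<Omega>) f"
    by (rule int_null_diff[OF fc refl]) (use bdK subbox_refl in blast)
  also have "\<dots> = (\<Sum>K\<in>P. set_lebesgue_integral (MM ?n) (hbox K) f)"
    unfolding unP[symmetric]
    by (rule int_partition[OF fc finP lenK disjP]) (use bdK PK hbox_sub in blast)+
  finally have eq: "set_lebesgue_integral (MM ?n) (box_set \<Omega>) f = (\<Sum>K\<in>P. set_lebesgue_integral (MM ?n) (hbox K) f)" .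
  have each: "\<bar>set_lebesgue_integral (MM ?n) (hbox K) f - quad R f K\<bar> \<le> indicator_eta F K" if K: "K \<in> P" for K
  proof -
    have sK: "subbox K \<Omega>" using PK[OF K] by simp
    let ?lo = "lower (F K)" and ?hi = "upper (F K)"
    have bd: "?lo \<le> f x \<and> f x \<le> ?hi" if "x \<in> box_set K" for x
      using encK[OF sK that] unfolding set_of_eq by simp
    have ib: "?lo * box_vol K \<le> set_lebesgue_integral (MM ?n) (hbox K) f"
      "set_lebesgue_integral (MM ?n) (hbox K) f \<le> ?hi * box_vol K"
      using int_hbox_bounds[OF fc lenK[OF K], of ?lo ?hi] bd hbox_sub by blast+
    have Rk: "\<forall>(w, x)\<in>set (R K). 0 < w \<and> in_box x K" "sum_list (map fst (R K)) = box_vol K"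
      using R sK unfolding valid_qrule_def by auto
    have qb: "\<And>w x. (w, x) \<in> set (R K) \<Longrightarrow> 0 < w \<and> ?lo \<le> f x \<and> f x \<le> ?hi"
    proof -
      fix w x assume wx: "(w, x) \<in> set (R K)"
      then have "0 < w" "in_box x K" using Rk(1) by auto
      then have "f x \<in> set_of (F K)" using enc sK unfolding box_enclosure_def by blast
      then show "0 < w \<and> ?lo \<le> f x \<and> f x \<le> ?hi" using \<open>0 < w\<close> unfolding set_of_eq by simp
    qed
    have q: "?lo * box_vol K \<le> quad R f K" "quad R f K \<le> ?hi * box_vol K"
      using quad_bounds[of "R K" ?lo f ?hi, OF qb] Rk(2) unfolding quad_def by auto
    have "\<bar>set_lebesgue_integral (MM ?n) (hbox K) f - quad R f K\<bar> \<le> ?hi * box_vol K - ?lo * box_vol K"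
      using ib q by linarith
    also have "\<dots> = indicator_eta F K" unfolding indicator_eta_def width_def by (simp add: algebra_simps)
    finally show ?thesis .
  qed
  have "\<bar>(\<Sum>K\<in>P. set_lebesgue_integral (MM ?n) (hbox K) f) - (\<Sum>K\<in>P. quad R f K)\<bar>
      = \<bar>\<Sum>K\<in>P. set_lebesgue_integral (MM ?n) (hbox K) f - quad R f K\<bar>" by (simp add: sum_subtractf)
  also have "\<dots> \<le> (\<Sum>K\<in>P. \<bar>set_lebesgue_integral (MM ?n) (hbox K) f - quad R f K\<bar>)" by (rule sum_abs)
  also have "\<dots> \<le> (\<Sum>K\<in>P. indicator_eta F K)" by (rule sum_mono) (rule each)
  finally show ?thesis using eq by simp
qed


lemma cont_parts:
  assumes sd: "\<forall>x. (s has_real_derivative s' x) (at x)"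
    and cs': "continuous_on UNIV s'" and p: "0 < p"
  shows "continuous_on UNIV (\<lambda>u. \<bar>nn_eval L d W b s u i\<bar> powr p)"
    "continuous_on UNIV (\<lambda>u. \<bar>partial (\<lambda>y. nn_eval L d W b s y i) j u\<bar> powr p)"
proof -
  have cs: "continuous_on UNIV s"
    using sd by (meson DERIV_isCont continuous_at_imp_continuous_on)
  have ce: "continuous_on UNIV (\<lambda>u. nn_eval L d W b s u i)"
    unfolding nn_eval_def using cont_nn[OF cs cs'] by (auto intro!: continuous_intros)
  have cp: "continuous_on UNIV (\<lambda>u. partial (\<lambda>y. nn_eval L d W b s y i) j u)"
    unfolding partial_nn_eval[OF sd] using cont_nn[OF cs cs'] by (auto intro!: continuous_intros)
  have pw: "continuous_on UNIV (\<lambda>u. \<bar>g u\<bar> powr p)" if "continuous_on UNIV g" for g :: "(nat \<Rightarrow> real) \<Rightarrow> real"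
    using that p by (intro continuous_on_powr' continuous_intros) auto
  show "continuous_on UNIV (\<lambda>u. \<bar>nn_eval L d W b s u i\<bar> powr p)" by (rule pw[OF ce])
  show "continuous_on UNIV (\<lambda>u. \<bar>partial (\<lambda>y. nn_eval L d W b s y i) j u\<bar> powr p)" by (rule pw[OF cp])
qed

theorem corollary4p14:
  fixes p \<theta> \<rho> :: real
    and L :: nat and d :: "nat \<Rightarrow> nat"
    and W :: "nat \<Rightarrow> nat \<Rightarrow> nat \<Rightarrow> real" and b :: "nat \<Rightarrow> nat \<Rightarrow> real"
    and \<sigma> \<sigma>' :: "real \<Rightarrow> real" and \<Sigma> \<Sigma>' :: "real interval \<Rightarrow> real interval"
    and \<Omega> :: "real interval list"
  assumes p: "1 \<le> p"
    and theta: "0 < \<theta>" "\<theta> < 1"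
    and rho: "0 < \<rho>" "\<rho> < 1"
    and widths: "\<forall>l \<le> Suc L. 1 \<le> d l"
    and Omega_dim: "length \<Omega> = d 0"
    and Omega_int: "\<forall>X \<in> set \<Omega>. lower X < upper X"
    and sigma_deriv: "\<forall>x. (\<sigma> has_real_derivative \<sigma>' x) (at x)"
    and Sigma: "ivl_enclosure \<sigma> \<Sigma>" "ivl_hoelder \<Sigma>"
    and Sigma': "ivl_enclosure \<sigma>' \<Sigma>'" "ivl_hoelder \<Sigma>'"
  shows "continuous_on UNIV (f_W1p L d W b \<sigma> p)
       \<and> box_enclosure \<Omega> (f_W1p L d W b \<sigma> p) (F_W1p L d W b \<Sigma> \<Sigma>' p)
       \<and> (\<exists>C \<gamma>. box_hoelder \<Omega> (F_W1p L d W b \<Sigma> \<Sigma>' p) C \<gamma>)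
       \<and> (\<forall>C \<gamma> R n. box_hoelder \<Omega> (F_W1p L d W b \<Sigma> \<Sigma>' p) C \<gamma> \<longrightarrow> valid_qrule \<Omega> R \<longrightarrow>
            \<bar>sobolev_W1p_norm (d 0) \<Omega> (d (Suc L)) (nn_eval L d W b \<sigma>) p
               - adaquad_Q \<theta> C \<gamma> \<rho> (F_W1p L d W b \<Sigma> \<Sigma>' p) \<Omega> R (f_W1p L d W b \<sigma> p) n powr (1 / p)\<bar>
              \<le> adaquad_eta \<theta> C \<gamma> \<rho> (F_W1p L d W b \<Sigma> \<Sigma>' p) \<Omega> n powr (1 / p)
          \<and> adaquad_eta \<theta> C \<gamma> \<rho> (F_W1p L d W b \<Sigma> \<Sigma>' p) \<Omega> (Suc n)
              \<le> (1 - \<theta> * (1 - \<rho>)) * adaquad_eta \<theta> C \<gamma> \<rho> (F_W1p L d W b \<Sigma> \<Sigma>' p) \<Omega> n)"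
proof -
  let ?f = "f_W1p L d W b \<sigma> p"
  let ?F = "F_W1p L d W b \<Sigma> \<Sigma>' p"
  let ?\<Phi> = "nn_eval L d W b \<sigma>"
  have p0: "0 < p" using p by simp
  have cs': "continuous_on UNIV \<sigma>'" by (rule hoelder_cont[OF Sigma'])
  have fc: "continuous_on UNIV ?f" by (rule cont_f[OF sigma_deriv cs' p0])
  have enc: "box_enclosure \<Omega> ?f ?F"
    by (rule F_box_enclosure[where d=d and p=p and L=L and W=W and b=b, OF sigma_deriv _ Sigma(1) Sigma'(1) Omega_dim]) (use p in simp)
  have ne: "\<Omega> \<noteq> []" using widths Omega_dim by auto
  have hex: "\<exists>C \<gamma>. box_hoelder \<Omega> ?F C \<gamma>"
    by (rule F_box_hoelder[where d=d and L=L and W=W and b=b, OF ne Sigma Sigma' Omega_dim p])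
  have nd: "nondeg \<Omega>" unfolding nondeg_def using Omega_int by auto
  have fnn: "0 \<le> ?f x" for x unfolding f_W1p_def by (intro sum_nonneg add_nonneg_nonneg) auto
  have main: "\<bar>sobolev_W1p_norm (d 0) \<Omega> (d (Suc L)) ?\<Phi> p
               - adaquad_Q \<theta> C \<gamma> \<rho> ?F \<Omega> R ?f n powr (1 / p)\<bar>
              \<le> adaquad_eta \<theta> C \<gamma> \<rho> ?F \<Omega> n powr (1 / p)
          \<and> adaquad_eta \<theta> C \<gamma> \<rho> ?F \<Omega> (Suc n)
              \<le> (1 - \<theta> * (1 - \<rho>)) * adaquad_eta \<theta> C \<gamma> \<rho> ?F \<Omega> n"
    if hb: "box_hoelder \<Omega> ?F C \<gamma>" and R: "valid_qrule \<Omega> R" for C \<gamma> R n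
  proof -
    have IP: "Inv \<Omega> (adaquad_P \<theta> C \<gamma> \<rho> ?F \<Omega> n) \<and>
      adaquad_eta \<theta> C \<gamma> \<rho> ?F \<Omega> (Suc n) \<le> (1 - \<theta> * (1 - \<rho>)) * adaquad_eta \<theta> C \<gamma> \<rho> ?F \<Omega> n"
      by (rule Inv_P[OF hb rho theta(1) _ ne nd]) (use theta in simp)
    define P where "P = adaquad_P \<theta> C \<gamma> \<rho> ?F \<Omega> n"
    have I: "Inv \<Omega> P" using IP unfolding P_def by simp
    define A where "A = set_lebesgue_integral (MM (length \<Omega>)) (box_set \<Omega>) ?f"
    define Q where "Q = adaquad_Q \<theta> C \<gamma> \<rho> ?F \<Omega> R ?f n"
    define E where "E = adaquad_eta \<theta> C \<gamma> \<rho> ?F \<Omega> n"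
    have err: "\<bar>A - Q\<bar> \<le> E"
      unfolding A_def Q_def E_def adaquad_Q_def adaquad_eta_def P_def[symmetric]
      by (rule quad_err[OF I enc R fc ne])
    define B where "B = mag (?F \<Omega>)"
    have fB: "?f x \<le> B" if "x \<in> box_set \<Omega>" for x
    proof -
      have "?f x \<in> set_of (?F \<Omega>)" using enc that in_box_of_box_set subbox_refl
        unfolding box_enclosure_def by blast
      then show ?thesis unfolding B_def using mag_ge by fastforce
    qed
    have A0: "0 \<le> A"
    proof -
      have "A = set_lebesgue_integral (MM (length \<Omega>)) (hbox \<Omega>) ?f"
        unfolding A_def by (rule int_null_diff[OF fc refl]) (use fB fnn in force)
      moreover have "0 * box_vol \<Omega> \<le> set_lebesgue_integral (MM (length \<Omega>)) (hbox \<Omega>) ?f"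
        by (rule int_hbox_bounds(1)[OF fc refl, of _ 0 B]) (use fB fnn hbox_sub in blast)
      ultimately show ?thesis by simp
    qed
    have Q0: "0 \<le> Q"
      unfolding Q_def adaquad_Q_def P_def[symmetric]
    proof (rule sum_nonneg)
      fix K assume K: "K \<in> P"
      then have sK: "subbox K \<Omega>" using I unfolding Inv_def by blast
      show "0 \<le> quad R ?f K" unfolding quad_def
      proof (rule sum_list_nonneg)
        fix y assume "y \<in> set (map (\<lambda>(w, x). w * ?f x) (R K))"
        then obtain w x where "(w, x) \<in> set (R K)" "y = w * ?f x" by auto
        moreover then have "0 < w" using R sK unfolding valid_qrule_def by fastforce
        ultimately show "0 \<le> y" using fnn by simp
      qed
    qed
    have E0: "0 \<le> E" unfolding E_def adaquad_eta_def by (intro sum_nonneg eta_nonneg)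
    have norm: "sobolev_W1p_norm (d 0) \<Omega> (d (Suc L)) ?\<Phi> p = A powr (1 / p)"
    proof -
      let ?M = "MM (length \<Omega>)"
      let ?S = "box_set \<Omega>"
      let ?g = "\<lambda>i u. \<bar>nn_eval L d W b \<sigma> u i\<bar> powr p"
      let ?h = "\<lambda>i j u. \<bar>partial (\<lambda>y. nn_eval L d W b \<sigma> y i) j u\<bar> powr p"
      have fdef: "?f x = (\<Sum>i<d (Suc L). ?g i x + (\<Sum>j<d 0. ?h i j x))" for x
        unfolding f_W1p_def ..
      have Ss: "?S \<in> sets ?M" by (rule box_set_sets) simp
      have Sf: "emeasure ?M ?S < \<infinity>" using emeasure_box_set[of \<Omega>] by simp
      have gle: "?g i x \<le> ?f x" if "i < d (Suc L)" for i x
      proof -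
        have "?g i x \<le> ?g i x + (\<Sum>j<d 0. ?h i j x)" by (simp add: sum_nonneg)
        also have "\<dots> \<le> ?f x" unfolding fdef
          by (rule member_le_sum[where f = "\<lambda>i. ?g i x + (\<Sum>j<d 0. ?h i j x)"]) (use that in \<open>auto intro!: add_nonneg_nonneg sum_nonneg\<close>)
        finally show ?thesis .
      qed
      have hle: "?h i j x \<le> ?f x" if "i < d (Suc L)" "j < d 0" for i j x
      proof -
        have "?h i j x \<le> (\<Sum>j<d 0. ?h i j x)"
          by (rule member_le_sum[where f = "\<lambda>j. ?h i j x"]) (use that in auto)
        also have "\<dots> \<le> ?g i x + (\<Sum>j<d 0. ?h i j x)" by simp
        also have "\<dots> \<le> ?f x" unfolding fdef
          by (rule member_le_sum[where f = "\<lambda>i. ?g i x + (\<Sum>j<d 0. ?h i j x)"]) (use that in \<open>auto intro!: add_nonneg_nonneg sum_nonneg\<close>)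
        finally show ?thesis .
      qed
      have gi: "set_integrable ?M ?S (?g i)" if "i < d (Suc L)" for i
        by (rule set_integrable_bounded[OF cont_parts(1)[OF sigma_deriv cs' p0] Ss Sf, where B=B])
           (simp, meson gle[OF that] fB order_trans)
      have hi: "set_integrable ?M ?S (?h i j)" if ij: "i < d (Suc L)" "j < d 0" for i j
      proof (rule set_integrable_bounded[OF cont_parts(2)[OF sigma_deriv cs' p0] Ss Sf, where B=B])
        fix x assume x: "x \<in> ?S"
        have "0 \<le> ?h i j x" by simp
        moreover have "?h i j x \<le> B" using hle[OF ij, of x] fB[OF x] by linarith
        ultimately show "\<bar>?h i j x\<bar> \<le> B" by simp
      qed
      have hs: "set_integrable ?M ?S (\<lambda>x. \<Sum>j<d 0. ?h i j x) \<and>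
          set_lebesgue_integral ?M ?S (\<lambda>x. \<Sum>j<d 0. ?h i j x) = (\<Sum>j<d 0. set_lebesgue_integral ?M ?S (?h i j))"
        if "i < d (Suc L)" for i
        by (rule set_integral_sum') (use hi that in auto)
      have ghi: "set_integrable ?M ?S (\<lambda>x. ?g i x + (\<Sum>j<d 0. ?h i j x)) \<and>
          set_lebesgue_integral ?M ?S (\<lambda>x. ?g i x + (\<Sum>j<d 0. ?h i j x))
          = set_lebesgue_integral ?M ?S (?g i) + (\<Sum>j<d 0. set_lebesgue_integral ?M ?S (?h i j))"
        if "i < d (Suc L)" for i
        using set_integral_add[OF gi[OF that] conjunct1[OF hs[OF that]]] conjunct2[OF hs[OF that]] by simp
      have "A = (\<Sum>i<d (Suc L). set_lebesgue_integral ?M ?S (\<lambda>x. ?g i x + (\<Sum>j<d 0. ?h i j x)))"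
        unfolding A_def fdef by (rule conjunct2[OF set_integral_sum']) (use ghi in auto)
      also have "\<dots> = (\<Sum>i<d (Suc L). set_lebesgue_integral ?M ?S (?g i) + (\<Sum>j<d 0. set_lebesgue_integral ?M ?S (?h i j)))"
        using ghi by (intro sum.cong) auto
      finally show ?thesis unfolding sobolev_W1p_norm_def Omega_dim by simp
    qed
    have r: "0 < 1 / p" "1 / p \<le> 1" using p by auto
    have "\<bar>A powr (1 / p) - Q powr (1 / p)\<bar> \<le> \<bar>A - Q\<bar> powr (1 / p)"
      by (rule powr_diff_abs[OF A0 Q0 r])
    also have "\<dots> \<le> E powr (1 / p)" using err r by (intro powr_mono2) auto
    finally have "\<bar>A powr (1 / p) - Q powr (1 / p)\<bar> \<le> E powr (1 / p)" .
    then show ?thesis using IP norm unfolding Q_def E_def by simp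
  qed
  show ?thesis using fc enc hex main by blast
qed


end
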